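(* The group $$G = \langle x,y,z,w \mid x^8 = y^2 = z^8 = w^2 = 1,\ x^y = x^3,\ z^w = z^3,\ [x,z] = x^2z^2,\ [z,y] = x^4,\ [x,w] = z^4,\ [y,w] = 1\rangle$$ has order $256$, and it is an exact product $G = HK$ with $H = \langle x,y\rangle \cong \mathrm{SD}_{16}$, $K = \langle z, w\rangle\cong\mathrm{SD}_{16}$, $H\cap K = \{1\}$, in which $x, z$ have order $8$, $y,w$ have order $2$, $[x,z] = x^2z^2 \ne 1$, and the cores are $\langle x\rangle^G = \langle x^2\rangle$ and $\langle z\rangle^G = \langle z^2\rangle$, both of order $4$. In particular, there exists an exact product of two copies of $\mathrm{SD}_{16}$ with both cores non-trivial and $[x,z]\neq 1$.
   Context: Conventions: $[g,h] = g^{-1}h^{-1}gh$, $g^h = h^{-1}gh$. $\mathrm{SD}_{16} = \langle x,y\mid x^8 = y^2 = 1, x^y = x^3\rangle$ is the semidihedral group of order 16. The core $X^G$ of $X \le G$ is the intersection of all conjugates of $X$ in $G$. *)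

theory Defs
  imports "HOL-Algebra.Algebra"
begin

text \<open>Letters: a generator together with a flag; flag True means the inverse
of the generator. Words are lists of letters.\<close>

type_synonym 'g letter = "'g \<times> bool"
type_synonym 'g word = "'g letter list"

text \<open>Equality in the group presented by the relations R (a set of pairs (u,v)
standing for the relation u = v): the congruence on words generated by free
cancellation and the relations.\<close>

inductive pres_eq :: "('g word \<times> 'g word) set \<Rightarrow> 'g word \<Rightarrow> 'g word \<Rightarrow> bool"
  for R :: "('g word \<times> 'g word) set" where
  refl: "pres_eq R u u"
| sym: "pres_eq R u v \<Longrightarrow> pres_eq R v u"
| trans: "pres_eq R u v \<Longrightarrow> pres_eq R v w \<Longrightarrow> pres_eq R u w"
| cancel: "pres_eq R (a @ [(g, b), (g, \<not> b)] @ c) (a @ c)"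
| rel: "(u, v) \<in> R \<Longrightarrow> pres_eq R (a @ u @ c) (a @ v @ c)"

definition pres_class :: "('g word \<times> 'g word) set \<Rightarrow> 'g word \<Rightarrow> 'g word set" where
  "pres_class R w = Collect (pres_eq R w)"

definition presented_group :: "('g word \<times> 'g word) set \<Rightarrow> 'g word set monoid" where
  "presented_group R =
     \<lparr> carrier = range (pres_class R),
       monoid.mult = (\<lambda>A B. pres_class R ((SOME a. a \<in> A) @ (SOME b. b \<in> B))),
       one = pres_class R [] \<rparr>"

definition pres_gen :: "('g word \<times> 'g word) set \<Rightarrow> 'g \<Rightarrow> 'g word set" where
  "pres_gen R g = pres_class R [(g, False)]"

abbreviation gpow :: "'g \<Rightarrow> nat \<Rightarrow> 'g word" where
  "gpow g n \<equiv> replicate n (g, False)"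

abbreviation ginv :: "'g \<Rightarrow> 'g word" where
  "ginv g \<equiv> [(g, True)]"

datatype gen4 = gX | gY | gZ | gW
datatype gen2 = gA | gB

text \<open>Conventions: [g,h] = g^-1 h^-1 g h and g^h = h^-1 g h.\<close>

definition SD16_rels :: "(gen2 word \<times> gen2 word) set" where
  "SD16_rels =
    { (gpow gA 8, []),
      (gpow gB 2, []),
      (ginv gB @ [(gA, False)] @ [(gB, False)], gpow gA 3) }"

definition SD16 :: "gen2 word set monoid" where
  "SD16 = presented_group SD16_rels"

definition G_rels :: "(gen4 word \<times> gen4 word) set" where
  "G_rels =
    { (gpow gX 8, []),
      (gpow gY 2, []),
      (gpow gZ 8, []),
      (gpow gW 2, []),
      (ginv gY @ [(gX, False)] @ [(gY, False)], gpow gX 3),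
      (ginv gW @ [(gZ, False)] @ [(gW, False)], gpow gZ 3),
      (ginv gX @ ginv gZ @ [(gX, False)] @ [(gZ, False)], gpow gX 2 @ gpow gZ 2),
      (ginv gZ @ ginv gY @ [(gZ, False)] @ [(gY, False)], gpow gX 4),
      (ginv gX @ ginv gW @ [(gX, False)] @ [(gW, False)], gpow gZ 4),
      (ginv gY @ ginv gW @ [(gY, False)] @ [(gW, False)], []) }"

definition G6 :: "gen4 word set monoid" where
  "G6 = presented_group G_rels"

definition core :: "('a, 'b) monoid_scheme \<Rightarrow> 'a set \<Rightarrow> 'a set" where
  "core G S = carrier G \<inter> (\<Inter>g\<in>carrier G. {inv\<^bsub>G\<^esub> g \<otimes>\<^bsub>G\<^esub> h \<otimes>\<^bsub>G\<^esub> g | h. h \<in> S})"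

end

theory Submission
  imports Defs
begin

lemma pres_eq_ctx: "pres_eq R u v \<Longrightarrow> pres_eq R (p @ u @ q) (p @ v @ q)"
proof (induction rule: pres_eq.induct)
  case (refl u) then show ?case by (rule pres_eq.refl)
next
  case (sym u v) show ?case by (rule pres_eq.sym[OF sym.IH])
next
  case (trans u v w) show ?case by (rule pres_eq.trans[OF trans.IH])
next
  case (cancel a g b c)
  have "pres_eq R ((p @ a) @ [(g, b), (g, \<not> b)] @ (c @ q)) ((p @ a) @ (c @ q))"
    by (rule pres_eq.cancel)
  then show ?case by simp
next
  case (rel u v a c)
  have "pres_eq R ((p @ a) @ u @ (c @ q)) ((p @ a) @ v @ (c @ q))"
    by (rule pres_eq.rel[OF rel])
  then show ?case by simp
qed

lemma pres_eq_appR: "pres_eq R u v \<Longrightarrow> pres_eq R (u @ q) (v @ q)"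
  using pres_eq_ctx[of R u v "[]" q] by simp

lemma pres_eq_appL: "pres_eq R u v \<Longrightarrow> pres_eq R (p @ u) (p @ v)"
  using pres_eq_ctx[of R u v p "[]"] by simp

lemma pres_eq_app: "pres_eq R u u' \<Longrightarrow> pres_eq R v v' \<Longrightarrow> pres_eq R (u @ v) (u' @ v')"
  by (meson pres_eq.trans pres_eq_appL pres_eq_appR)

lemma pres_class_eq: "pres_class R u = pres_class R v \<longleftrightarrow> pres_eq R u v"
proof
  assume "pres_class R u = pres_class R v"
  then have "v \<in> pres_class R u" by (simp add: pres_class_def pres_eq.refl)
  then show "pres_eq R u v" by (simp add: pres_class_def)
next
  assume "pres_eq R u v"
  then show "pres_class R u = pres_class R v"
    unfolding pres_class_def by (auto intro: pres_eq.trans pres_eq.sym)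
qed

lemma some_class: "pres_eq R u (SOME a. a \<in> pres_class R u)"
proof -
  have "u \<in> pres_class R u" by (simp add: pres_class_def pres_eq.refl)
  then have "(SOME a. a \<in> pres_class R u) \<in> pres_class R u" by (rule someI)
  then show ?thesis by (simp add: pres_class_def)
qed

lemma pg_mult: "pres_class R u \<otimes>\<^bsub>presented_group R\<^esub> pres_class R v = pres_class R (u @ v)"
  unfolding presented_group_def pres_class_eq[symmetric] apply simp
  unfolding pres_class_eq
  by (rule pres_eq_app[OF pres_eq.sym[OF some_class] pres_eq.sym[OF some_class]])

lemma pg_one: "\<one>\<^bsub>presented_group R\<^esub> = pres_class R []"
  by (simp add: presented_group_def)

lemma pg_carrier: "carrier (presented_group R) = range (pres_class R)"
  by (simp add: presented_group_def)

definition invw :: "'g word \<Rightarrow> 'g word" where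
  "invw u = rev (map (\<lambda>(g, b). (g, \<not> b)) u)"

lemma invw_Nil [simp]: "invw [] = []" by (simp add: invw_def)
lemma invw_Cons [simp]: "invw (l # u) = invw u @ [(fst l, \<not> snd l)]"
  by (simp add: invw_def split: prod.splits)
lemma invw_append [simp]: "invw (u @ v) = invw v @ invw u"
  by (simp add: invw_def)

lemma invw_cancel: "pres_eq R (u @ invw u) []"
proof (induction u)
  case Nil then show ?case by (simp add: pres_eq.refl)
next
  case (Cons l u)
  obtain g b where l: "l = (g, b)" by (cases l)
  have "pres_eq R ([l] @ (u @ invw u) @ [(g, \<not> b)]) ([l] @ [] @ [(g, \<not> b)])"
    by (rule pres_eq_ctx[OF Cons.IH])
  moreover have "pres_eq R ([] @ [(g, b), (g, \<not> b)] @ []) ([] @ [])"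
    by (rule pres_eq.cancel)
  ultimately show ?case using l by (auto intro: pres_eq.trans)
qed

lemma invw_invw [simp]: "invw (invw u) = u"
  by (induction u) auto

lemma invw_cancel2: "pres_eq R (invw u @ u) []"
  using invw_cancel[of R "invw u"] by simp

lemma pg_group: "group (presented_group R)"
proof (rule groupI)
  fix x y assume "x \<in> carrier (presented_group R)" "y \<in> carrier (presented_group R)"
  then show "x \<otimes>\<^bsub>presented_group R\<^esub> y \<in> carrier (presented_group R)"
    by (auto simp: pg_carrier pg_mult)
next
  show "\<one>\<^bsub>presented_group R\<^esub> \<in> carrier (presented_group R)"
    by (simp add: pg_carrier pg_one)
next
  fix x y z assume "x \<in> carrier (presented_group R)" "y \<in> carrier (presented_group R)"
    "z \<in> carrier (presented_group R)"
  then show "x \<otimes>\<^bsub>presented_group R\<^esub> y \<otimes>\<^bsub>presented_group R\<^esub> z =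
    x \<otimes>\<^bsub>presented_group R\<^esub> (y \<otimes>\<^bsub>presented_group R\<^esub> z)"
    by (auto simp: pg_carrier pg_mult)
next
  fix x assume "x \<in> carrier (presented_group R)"
  then show "\<one>\<^bsub>presented_group R\<^esub> \<otimes>\<^bsub>presented_group R\<^esub> x = x"
    by (auto simp: pg_carrier pg_mult pg_one)
next
  fix x assume "x \<in> carrier (presented_group R)"
  then obtain u where u: "x = pres_class R u" by (auto simp: pg_carrier)
  have "pres_class R (invw u) \<otimes>\<^bsub>presented_group R\<^esub> x = \<one>\<^bsub>presented_group R\<^esub>"
    unfolding u pg_mult pg_one pres_class_eq by (rule invw_cancel2)
  then show "\<exists>y\<in>carrier (presented_group R). y \<otimes>\<^bsub>presented_group R\<^esub> x = \<one>\<^bsub>presented_group R\<^esub>"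
    by (auto simp: pg_carrier)
qed

lemma pg_inv: "inv\<^bsub>presented_group R\<^esub> (pres_class R u) = pres_class R (invw u)"
proof -
  interpret group "presented_group R" by (rule pg_group)
  have "pres_class R (invw u) \<otimes>\<^bsub>presented_group R\<^esub> pres_class R u = \<one>\<^bsub>presented_group R\<^esub>"
    unfolding pg_mult pg_one pres_class_eq by (rule invw_cancel2)
  then show ?thesis
    by (metis inv_equality pg_carrier rangeI)
qed

lemma pg_in_carrier [simp]: "pres_class R u \<in> carrier (presented_group R)"
  by (simp add: pg_carrier)

lemma pg_pow: "pres_class R u [^]\<^bsub>presented_group R\<^esub> (n::nat) = pres_class R (concat (replicate n u))"
proof (induction n)
  case 0 then show ?case by (simp add: pg_one)
next
  case (Suc n)
  interpret group "presented_group R" by (rule pg_group)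
  have "pres_class R u [^]\<^bsub>presented_group R\<^esub> Suc n
      = pres_class R u [^]\<^bsub>presented_group R\<^esub> n \<otimes>\<^bsub>presented_group R\<^esub> pres_class R u"
    by (rule nat_pow_Suc)
  also have "... = pres_class R (concat (replicate n u) @ u)" by (simp only: Suc.IH pg_mult)
  also have "concat (replicate n u) @ u = concat (replicate (Suc n) u)"
    by (induction n) simp_all
  finally show ?case .
qed

lemma replicate_numeral [simp]: "replicate (numeral n) x = x # replicate (pred_numeral n) x"
  by (simp add: numeral_eq_Suc)

definition permX :: "nat list" where "permX = [0, 3, 6, 1, 9, 7, 2, 5, 14, 4, 15, 11, 12, 13, 8, 10, 17, 19, 22, 21, 23, 27, 28, 26, 29, 30, 24, 31, 20, 18, 16, 25]"
definition ipermX :: "nat list" where "ipermX = [0, 3, 6, 1, 9, 7, 2, 5, 14, 4, 15, 11, 12, 13, 8, 10, 30, 16, 29, 17, 28, 19, 18, 20, 26, 31, 23, 21, 22, 24, 25, 27]"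
definition permY :: "nat list" where "permY = [0, 1, 2, 3, 4, 5, 6, 7, 8, 9, 10, 11, 12, 13, 14, 15, 18, 20, 16, 24, 17, 22, 21, 27, 19, 28, 30, 23, 25, 31, 26, 29]"
definition ipermY :: "nat list" where "ipermY = [0, 1, 2, 3, 4, 5, 6, 7, 8, 9, 10, 11, 12, 13, 14, 15, 18, 20, 16, 24, 17, 22, 21, 27, 19, 28, 30, 23, 25, 31, 26, 29]"
definition permZ :: "nat list" where "permZ = [1, 4, 7, 0, 10, 6, 8, 13, 11, 3, 12, 14, 15, 5, 2, 9, 16, 21, 23, 25, 26, 17, 29, 18, 24, 19, 20, 27, 28, 22, 31, 30]"
definition ipermZ :: "nat list" where "ipermZ = [3, 0, 14, 9, 1, 13, 5, 2, 6, 15, 4, 8, 10, 7, 11, 12, 16, 21, 23, 25, 26, 17, 29, 18, 24, 19, 20, 27, 28, 22, 31, 30]"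
definition permW :: "nat list" where "permW = [2, 5, 0, 8, 11, 1, 12, 10, 3, 13, 7, 4, 6, 9, 15, 14, 16, 17, 18, 19, 20, 21, 22, 23, 24, 25, 26, 27, 28, 29, 30, 31]"
definition ipermW :: "nat list" where "ipermW = [2, 5, 0, 8, 11, 1, 12, 10, 3, 13, 7, 4, 6, 9, 15, 14, 16, 17, 18, 19, 20, 21, 22, 23, 24, 25, 26, 27, 28, 29, 30, 31]"

fun la :: "gen4 letter \<Rightarrow> nat \<Rightarrow> nat" where
  "la (gX, False) p = permX ! p"
| "la (gX, True) p = ipermX ! p"
| "la (gY, False) p = permY ! p"
| "la (gY, True) p = ipermY ! p"
| "la (gZ, False) p = permZ ! p"
| "la (gZ, True) p = ipermZ ! p"
| "la (gW, False) p = permW ! p"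
| "la (gW, True) p = ipermW ! p"

fun wa :: "gen4 word \<Rightarrow> nat \<Rightarrow> nat" where
  "wa [] p = p"
| "wa (l # u) p = wa u (la l p)"

lemmas perm_defs = permX_def ipermX_def permY_def ipermY_def permZ_def ipermZ_def permW_def ipermW_def

lemma wa_append [simp]: "wa (u @ v) p = wa v (wa u p)"
  by (induction u arbitrary: p) auto

lemma all32: "(\<forall>p<32. Q p) \<longleftrightarrow> list_all Q [0..<32]"
  by (auto simp: list_all_iff)

definition letters4 :: "gen4 letter list" where
  "letters4 = [(gX,False),(gX,True),(gY,False),(gY,True),(gZ,False),(gZ,True),(gW,False),(gW,True)]"

lemma in_letters4: "(g, b) \<in> set letters4"
  by (cases g; cases b) (simp_all add: letters4_def)

lemma la_bound: "p < 32 \<Longrightarrow> la (g, b) p < 32"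
proof -
  have "list_all (\<lambda>l. list_all (\<lambda>p. la l p < 32) [0..<32]) letters4"
    unfolding letters4_def by code_simp
  then show "p < 32 \<Longrightarrow> ?thesis" using in_letters4[of g b] by (auto simp: list_all_iff)
qed

lemma wa_bound: "p < 32 \<Longrightarrow> wa u p < 32"
proof (induction u arbitrary: p)
  case (Cons l u)
  obtain g b where "l = (g, b)" by (cases l)
  then show ?case using Cons la_bound by simp
qed simp

lemma la_cancel: "p < 32 \<Longrightarrow> la (g, \<not> b) (la (g, b) p) = p"
proof -
  have "list_all (\<lambda>(g,b). list_all (\<lambda>p. la (g, \<not> b) (la (g, b) p) = p) [0..<32]) letters4"
    unfolding letters4_def by code_simp
  then show "p < 32 \<Longrightarrow> ?thesis" using in_letters4[of g b] by (auto simp: list_all_iff)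
qed

definition G_rels_list :: "(gen4 word \<times> gen4 word) list" where
  "G_rels_list =
    [ (gpow gX 8, []),
      (gpow gY 2, []),
      (gpow gZ 8, []),
      (gpow gW 2, []),
      (ginv gY @ [(gX, False)] @ [(gY, False)], gpow gX 3),
      (ginv gW @ [(gZ, False)] @ [(gW, False)], gpow gZ 3),
      (ginv gX @ ginv gZ @ [(gX, False)] @ [(gZ, False)], gpow gX 2 @ gpow gZ 2),
      (ginv gZ @ ginv gY @ [(gZ, False)] @ [(gY, False)], gpow gX 4),
      (ginv gX @ ginv gW @ [(gX, False)] @ [(gW, False)], gpow gZ 4),
      (ginv gY @ ginv gW @ [(gY, False)] @ [(gW, False)], []) ]"

lemma G_rels_set: "G_rels = set G_rels_list"
  unfolding G_rels_def G_rels_list_def by (simp only: list.set)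

lemma rels_wa: "(u, v) \<in> G_rels \<Longrightarrow> p < 32 \<Longrightarrow> wa u p = wa v p"
proof -
  have "list_all (\<lambda>(u, v). list_all (\<lambda>p. wa u p = wa v p) [0..<32]) G_rels_list"
    unfolding G_rels_list_def by code_simp
  then show "(u, v) \<in> G_rels \<Longrightarrow> p < 32 \<Longrightarrow> wa u p = wa v p"
    unfolding G_rels_set using all32 by (fastforce simp: list_all_iff)
qed

lemma pres_eq_wa: "pres_eq G_rels u v \<Longrightarrow> p < 32 \<Longrightarrow> wa u p = wa v p"
proof (induction arbitrary: p rule: pres_eq.induct)
  case (refl u) then show ?case by simp
next
  case (sym u v) then show ?case by metis
next
  case (trans u v w) then show ?case by metis
next
  case (cancel a g b c)
  have "la (g, \<not> b) (la (g, b) (wa a p)) = wa a p"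
    by (rule la_cancel[OF wa_bound[OF cancel]])
  then show ?case by simp
next
  case (rel u v a c)
  have "wa u (wa a p) = wa v (wa a p)"
    by (rule rels_wa[OF rel(1) wa_bound[OF rel(2)]])
  then show ?case by simp
qed

lemma class_wa: "pres_class G_rels u = pres_class G_rels v \<Longrightarrow> p < 32 \<Longrightarrow> wa u p = wa v p"
  using pres_eq_wa pres_class_eq by blast

lemma (in group) gen_closed:
  assumes S: "S \<subseteq> carrier G" and gens: "gens \<subseteq> carrier G" and one: "\<one> \<in> S"
    and c1: "\<And>s g. s \<in> S \<Longrightarrow> g \<in> gens \<Longrightarrow> s \<otimes> g \<in> S"
    and c2: "\<And>s g. s \<in> S \<Longrightarrow> g \<in> gens \<Longrightarrow> s \<otimes> inv g \<in> S"
  shows "generate G gens \<subseteq> S"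
proof -
  have "\<forall>s\<in>S. s \<otimes> t \<in> S" if "t \<in> generate G gens" for t
    using that
  proof (induction rule: generate.induct)
    case one then show ?case using S by auto
  next
    case (incl h) then show ?case using c1 by auto
  next
    case (inv h) then show ?case using c2 by auto
  next
    case (eng h1 h2)
    have h: "h1 \<in> carrier G" "h2 \<in> carrier G"
      using eng.hyps generate_in_carrier[OF gens] by auto
    show ?case
    proof
      fix s assume s: "s \<in> S"
      then have "s \<in> carrier G" using S by auto
      then have "s \<otimes> (h1 \<otimes> h2) = (s \<otimes> h1) \<otimes> h2" using h by (simp add: m_assoc)
      then show "s \<otimes> (h1 \<otimes> h2) \<in> S" using eng.IH s by auto
    qed
  qed
  moreover have "t \<in> generate G gens \<Longrightarrow> \<one> \<otimes> t = t" for t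
    using generate_in_carrier[OF gens] by auto
  ultimately show ?thesis using one by force
qed

lemma (in group) pow_mod:
  assumes a: "a \<in> carrier G" and n: "a [^] (n::nat) = \<one>"
  shows "a [^] (m::nat) = a [^] (m mod n)"
proof -
  have "a [^] m = a [^] (n * (m div n) + m mod n)" by simp
  also have "... = (a [^] n) [^] (m div n) \<otimes> a [^] (m mod n)"
    using a by (simp add: nat_pow_mult nat_pow_pow)
  also have "... = a [^] (m mod n)" using a n by simp
  finally show ?thesis .
qed

lemma (in group) inv_pow:
  assumes a: "a \<in> carrier G" and n: "a [^] (n::nat) = \<one>" and n0: "0 < n"
  shows "inv a = a [^] (n - 1)"
proof (rule inv_equality)
  have "a [^] (n - 1) \<otimes> a = a [^] (Suc (n - 1))" using a by simp
  also have "Suc (n - 1) = n" using n0 by simp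
  finally show "a [^] (n - 1) \<otimes> a = \<one>" using n by simp
qed (use a in auto)

lemma (in group) cyc_gen:
  assumes a: "a \<in> carrier G" and n: "a [^] (n::nat) = \<one>" and n0: "0 < n"
  shows "generate G {a} \<subseteq> (\<lambda>i. a [^] i) ` {..<n}"
proof (rule gen_closed)
  show "(\<lambda>i. a [^] i) ` {..<n} \<subseteq> carrier G" using a by auto
  show "{a} \<subseteq> carrier G" using a by auto
  show "\<one> \<in> (\<lambda>i. a [^] i) ` {..<n}"
    using n0 by (auto intro!: image_eqI[of _ _ 0])
  fix s g assume s: "s \<in> (\<lambda>i. a [^] i) ` {..<n}" and g: "g \<in> {a}"
  from s obtain i :: nat where i: "s = a [^] i" by auto
  have "s \<otimes> g = a [^] (Suc i)" using i g a by simp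
  also have "... = a [^] (Suc i mod n)" by (rule pow_mod[OF a n])
  finally show "s \<otimes> g \<in> (\<lambda>i. a [^] i) ` {..<n}" using n0 by auto
  have "s \<otimes> inv g = a [^] (i + (n - 1))" using i g a inv_pow[OF a n n0] by (simp add: nat_pow_mult)
  also have "... = a [^] ((i + (n - 1)) mod n)" by (rule pow_mod[OF a n])
  finally show "s \<otimes> inv g \<in> (\<lambda>i. a [^] i) ` {..<n}" using n0 by auto
qed

lemma (in group) sd_gen:
  assumes a: "a \<in> carrier G" and b: "b \<in> carrier G"
    and a8: "a [^] (8::nat) = \<one>" and b2: "b [^] (2::nat) = \<one>"
    and r: "inv b \<otimes> a \<otimes> b = a [^] (3::nat)"
  shows "generate G {a, b} \<subseteq> (\<lambda>(i, j). a [^] i \<otimes> b [^] j) ` ({..<8::nat} \<times> {..<2::nat})"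
    (is "_ \<subseteq> ?S")
proof -
  have bb: "b \<otimes> b = \<one>" using b2 b by (simp add: numeral_2_eq_2)
  have ib: "inv b = b" using bb b by (simp add: inv_equality)
  have ba: "b \<otimes> a = a [^] (3::nat) \<otimes> b"
  proof -
    have "b \<otimes> a \<otimes> b \<otimes> b = a [^] (3::nat) \<otimes> b" using r ib by simp
    then show ?thesis using a b bb by (simp add: m_assoc)
  qed
  have Sc: "?S \<subseteq> carrier G" using a b by auto
  have inS: "a [^] i \<otimes> b [^] j \<in> ?S" if "i < 8" "j < 2" for i j :: nat
    by (rule image_eqI[where x="(i,j)"]) (use that in auto)
  have ca: "s \<otimes> a \<in> ?S" if s: "s \<in> ?S" for s
  proof -
    from s obtain i j :: nat where ij: "s = a [^] i \<otimes> b [^] j" "i < 8" "j < 2" by auto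
    show ?thesis
    proof (cases "j = 0")
      case True
      then have "s \<otimes> a = a [^] (Suc i)" using ij a by simp
      also have "... = a [^] (Suc i mod 8) \<otimes> b [^] (0::nat)" using pow_mod[OF a a8] a by simp
      finally show ?thesis using inS[of "Suc i mod 8" 0] by simp
    next
      case False
      then have j: "j = 1" using ij by simp
      have "s \<otimes> a = a [^] i \<otimes> (b \<otimes> a)" using ij j a b by (simp add: m_assoc)
      also have "... = a [^] i \<otimes> a [^] (3::nat) \<otimes> b" using ba a b by (simp add: m_assoc)
      also have "... = a [^] ((i + 3) mod 8) \<otimes> b [^] (1::nat)"
        using a b pow_mod[OF a a8, of "i + 3"] by (simp add: nat_pow_mult)
      finally show ?thesis using inS[of "(i + 3) mod 8" 1] by simp
    qed
  qed
  have cb: "s \<otimes> b \<in> ?S" if s: "s \<in> ?S" for s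
  proof -
    from s obtain i j :: nat where ij: "s = a [^] i \<otimes> b [^] j" "i < 8" "j < 2" by auto
    show ?thesis
    proof (cases "j = 0")
      case True
      then have "s \<otimes> b = a [^] i \<otimes> b [^] (1::nat)" using ij a b by simp
      then show ?thesis using ij inS[of i 1] by simp
    next
      case False
      then have j: "j = 1" using ij by simp
      have "s \<otimes> b = a [^] i \<otimes> (b \<otimes> b)" using ij j a b by (simp add: m_assoc)
      also have "... = a [^] i \<otimes> b [^] (0::nat)" using bb a by simp
      finally show ?thesis using ij inS[of i 0] by simp
    qed
  qed
  have cpow: "s \<otimes> a [^] (k::nat) \<in> ?S" if s: "s \<in> ?S" for s k
  proof (induction k)
    case 0
    have "s \<in> carrier G" using s Sc by blast
    then show ?case using s by simp
  next
    case (Suc k)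
    have sc: "s \<in> carrier G" using s Sc by blast
    have "s \<otimes> a [^] Suc k = (s \<otimes> a [^] k) \<otimes> a" using sc a by (simp add: m_assoc)
    then show ?case using ca[OF Suc] by simp
  qed
  show ?thesis
  proof (rule gen_closed[OF Sc])
    show "{a, b} \<subseteq> carrier G" using a b by auto
    show "\<one> \<in> ?S" using inS[of 0 0] a b by simp
    fix s g assume s: "s \<in> ?S" and g: "g \<in> {a, b}"
    show "s \<otimes> g \<in> ?S" using g ca[OF s] cb[OF s] by auto
    have "inv a = a [^] (7::nat)" using inv_pow[OF a a8] by simp
    then show "s \<otimes> inv g \<in> ?S" using g cpow[OF s] cb[OF s] ib by auto
  qed
qed

lemma G6_group: "group G6" unfolding G6_def by (rule pg_group)
lemma G6_mult: "pres_class G_rels u \<otimes>\<^bsub>G6\<^esub> pres_class G_rels v = pres_class G_rels (u @ v)"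
  unfolding G6_def by (rule pg_mult)
lemma G6_one: "\<one>\<^bsub>G6\<^esub> = pres_class G_rels []"
  unfolding G6_def by (rule pg_one)
lemma G6_inv: "inv\<^bsub>G6\<^esub> (pres_class G_rels u) = pres_class G_rels (invw u)"
  unfolding G6_def by (rule pg_inv)
lemma G6_pow: "pres_class G_rels u [^]\<^bsub>G6\<^esub> (n::nat) = pres_class G_rels (concat (replicate n u))"
  unfolding G6_def by (rule pg_pow)
lemma G6_in [simp]: "pres_class G_rels u \<in> carrier G6"
  unfolding G6_def by (rule pg_in_carrier)
lemma G6_carrier: "carrier G6 = range (pres_class G_rels)"
  unfolding G6_def by (rule pg_carrier)
lemma rel_class: "(u, v) \<in> G_rels \<Longrightarrow> pres_class G_rels u = pres_class G_rels v"
  unfolding pres_class_eq using pres_eq.rel[of u v G_rels "[]" "[]"] by simp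

interpretation G6: group G6 by (rule G6_group)

lemma concat_rep1: "concat (replicate n [x]) = replicate n x"
  by (induction n) auto

definition L :: "gen4 letter \<Rightarrow> gen4 word set" where
  "L l = pres_class G_rels [l]"

lemma L_in [simp]: "L l \<in> carrier G6" by (simp add: L_def)

definition Pc :: "gen4 word set set \<Rightarrow> bool" where
  "Pc A \<longleftrightarrow> A \<subseteq> carrier G6 \<and> finite A \<and> card A \<le> 16"

lemma Pstep: "Pc A \<Longrightarrow> Pc (A #>\<^bsub>G6\<^esub> L l)"
proof -
  assume "Pc A"
  then have A: "A \<subseteq> carrier G6" "finite A" "card A \<le> 16" by (auto simp: Pc_def)
  have e: "A #>\<^bsub>G6\<^esub> L l = (\<lambda>h. h \<otimes>\<^bsub>G6\<^esub> L l) ` A" by (auto simp: r_coset_def)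
  have "card ((\<lambda>h. h \<otimes>\<^bsub>G6\<^esub> L l) ` A) \<le> card A" by (rule card_image_le[OF A(2)])
  then show ?thesis unfolding Pc_def e using A by auto
qed

lemma pnil: "Pc A \<Longrightarrow> A #>\<^bsub>G6\<^esub> pres_class G_rels [] = A"
  unfolding G6_one[symmetric] Pc_def by auto

lemma pcons: "A #>\<^bsub>G6\<^esub> L l = C \<Longrightarrow> C #>\<^bsub>G6\<^esub> pres_class G_rels ls = B \<Longrightarrow> Pc A
  \<Longrightarrow> A #>\<^bsub>G6\<^esub> pres_class G_rels (l # ls) = B"
proof -
  assume 1: "A #>\<^bsub>G6\<^esub> L l = C" and 2: "C #>\<^bsub>G6\<^esub> pres_class G_rels ls = B" and "Pc A"
  then have A: "A \<subseteq> carrier G6" by (simp add: Pc_def)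
  have "pres_class G_rels (l # ls) = L l \<otimes>\<^bsub>G6\<^esub> pres_class G_rels ls"
    by (simp add: L_def G6_mult)
  then have "A #>\<^bsub>G6\<^esub> pres_class G_rels (l # ls) = (A #>\<^bsub>G6\<^esub> L l) #>\<^bsub>G6\<^esub> pres_class G_rels ls"
    using G6.coset_mult_assoc[OF A] by simp
  then show ?thesis using 1 2 by simp
qed

lemma rcos_cancel: "M \<subseteq> carrier G6 \<Longrightarrow> r \<in> carrier G6 \<Longrightarrow> (M #>\<^bsub>G6\<^esub> r) #>\<^bsub>G6\<^esub> (inv\<^bsub>G6\<^esub> r) = M"
  by (simp add: G6.coset_mult_assoc)

lemma ded: "pres_class G_rels (l # rest) = \<one>\<^bsub>G6\<^esub> \<Longrightarrow> D #>\<^bsub>G6\<^esub> pres_class G_rels rest = A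
  \<Longrightarrow> Pc A \<Longrightarrow> Pc D \<Longrightarrow> A #>\<^bsub>G6\<^esub> L l = D"
proof -
  assume r: "pres_class G_rels (l # rest) = \<one>\<^bsub>G6\<^esub>" and p: "D #>\<^bsub>G6\<^esub> pres_class G_rels rest = A"
    and "Pc A" "Pc D"
  then have A: "A \<subseteq> carrier G6" and D: "D \<subseteq> carrier G6" by (auto simp: Pc_def)
  let ?r = "pres_class G_rels rest"
  have "A = A #>\<^bsub>G6\<^esub> pres_class G_rels (l # rest)" using A r by simp
  also have "pres_class G_rels (l # rest) = L l \<otimes>\<^bsub>G6\<^esub> ?r" by (simp add: L_def G6_mult)
  finally have "A = (A #>\<^bsub>G6\<^esub> L l) #>\<^bsub>G6\<^esub> ?r" using G6.coset_mult_assoc[OF A] by simp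
  then have "(A #>\<^bsub>G6\<^esub> L l) #>\<^bsub>G6\<^esub> ?r = D #>\<^bsub>G6\<^esub> ?r" using p by simp
  then have "((A #>\<^bsub>G6\<^esub> L l) #>\<^bsub>G6\<^esub> ?r) #>\<^bsub>G6\<^esub> (inv\<^bsub>G6\<^esub> ?r) = (D #>\<^bsub>G6\<^esub> ?r) #>\<^bsub>G6\<^esub> (inv\<^bsub>G6\<^esub> ?r)"
    by simp
  moreover have "A #>\<^bsub>G6\<^esub> L l \<subseteq> carrier G6" using A by (simp add: G6.r_coset_subset_G)
  ultimately show ?thesis using rcos_cancel D by simp
qed

lemma flip_gen: "A #>\<^bsub>G6\<^esub> L (g, b) = B \<Longrightarrow> Pc A \<Longrightarrow> B #>\<^bsub>G6\<^esub> L (g, \<not> b) = A"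
proof -
  assume 1: "A #>\<^bsub>G6\<^esub> L (g, b) = B" and "Pc A"
  then have A: "A \<subseteq> carrier G6" by (simp add: Pc_def)
  have c: "pres_class G_rels ([] @ [(g, b), (g, \<not> b)] @ []) = pres_class G_rels ([] @ [])"
    unfolding pres_class_eq by (rule pres_eq.cancel)
  have "B #>\<^bsub>G6\<^esub> L (g, \<not> b) = (A #>\<^bsub>G6\<^esub> L (g, b)) #>\<^bsub>G6\<^esub> L (g, \<not> b)"
    using 1 by simp
  also have "... = A #>\<^bsub>G6\<^esub> (L (g, b) \<otimes>\<^bsub>G6\<^esub> L (g, \<not> b))"
    by (rule G6.coset_mult_assoc[OF A]) simp_all
  also have "L (g, b) \<otimes>\<^bsub>G6\<^esub> L (g, \<not> b) = \<one>\<^bsub>G6\<^esub>"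
    using c by (simp add: L_def G6_mult G6_one)
  finally show ?thesis using A by simp
qed

lemma flipF: "A #>\<^bsub>G6\<^esub> L (g, False) = B \<Longrightarrow> Pc A \<Longrightarrow> B #>\<^bsub>G6\<^esub> L (g, True) = A"
  using flip_gen[of A g False B] by simp
lemma flipT: "A #>\<^bsub>G6\<^esub> L (g, True) = B \<Longrightarrow> Pc A \<Longrightarrow> B #>\<^bsub>G6\<^esub> L (g, False) = A"
  using flip_gen[of A g True B] by simp
lemma tr1: "A #>\<^bsub>G6\<^esub> a = B \<Longrightarrow> A = A' \<Longrightarrow> A' #>\<^bsub>G6\<^esub> a = B" by simp
lemma tr2: "A #>\<^bsub>G6\<^esub> a = B \<Longrightarrow> B = B' \<Longrightarrow> A #>\<^bsub>G6\<^esub> a = B'" by simp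

lemma rot_class: "(u, v) \<in> G_rels \<Longrightarrow> a @ b = u @ invw v \<Longrightarrow> pres_class G_rels (b @ a) = \<one>\<^bsub>G6\<^esub>"
proof -
  assume uv: "(u, v) \<in> G_rels" and ab: "a @ b = u @ invw v"
  have "pres_class G_rels (u @ invw v) = pres_class G_rels (v @ invw v)"
    unfolding pres_class_eq using pres_eq.rel[OF uv, of "[]" "invw v"] by simp
  also have "... = pres_class G_rels []" unfolding pres_class_eq by (rule invw_cancel)
  finally have "pres_class G_rels a \<otimes>\<^bsub>G6\<^esub> pres_class G_rels b = \<one>\<^bsub>G6\<^esub>"
    using ab by (simp add: G6_mult G6_one)
  then have "inv\<^bsub>G6\<^esub> pres_class G_rels b = pres_class G_rels a"
    by (simp add: G6.inv_equality)
  then have "pres_class G_rels b \<otimes>\<^bsub>G6\<^esub> pres_class G_rels a = \<one>\<^bsub>G6\<^esub>"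
    by (metis G6.r_inv G6_in)
  then show ?thesis by (simp add: G6_mult)
qed

lemma rho0: "pres_class G_rels [(gX,False),(gX,False),(gX,False),(gX,False),(gX,False),(gX,False),(gX,False),(gX,False)] = \<one>\<^bsub>G6\<^esub>"
  using rot_class[of "[(gX,False),(gX,False),(gX,False),(gX,False),(gX,False),(gX,False),(gX,False),(gX,False)]" "[]" "[]" "[(gX,False),(gX,False),(gX,False),(gX,False),(gX,False),(gX,False),(gX,False),(gX,False)]"] by (simp add: G_rels_def)
lemma rho1: "pres_class G_rels [(gY,False),(gY,False)] = \<one>\<^bsub>G6\<^esub>"
  using rot_class[of "[(gY,False),(gY,False)]" "[]" "[]" "[(gY,False),(gY,False)]"] by (simp add: G_rels_def)
lemma rho2: "pres_class G_rels [(gZ,False),(gZ,False),(gZ,False),(gZ,False),(gZ,False),(gZ,False),(gZ,False),(gZ,False)] = \<one>\<^bsub>G6\<^esub>"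
  using rot_class[of "[(gZ,False),(gZ,False),(gZ,False),(gZ,False),(gZ,False),(gZ,False),(gZ,False),(gZ,False)]" "[]" "[]" "[(gZ,False),(gZ,False),(gZ,False),(gZ,False),(gZ,False),(gZ,False),(gZ,False),(gZ,False)]"] by (simp add: G_rels_def)
lemma rho3: "pres_class G_rels [(gW,False),(gW,False)] = \<one>\<^bsub>G6\<^esub>"
  using rot_class[of "[(gW,False),(gW,False)]" "[]" "[]" "[(gW,False),(gW,False)]"] by (simp add: G_rels_def)
lemma rho4: "pres_class G_rels [(gY,True),(gX,False),(gY,False),(gX,True),(gX,True),(gX,True)] = \<one>\<^bsub>G6\<^esub>"
  using rot_class[of "[(gY,True),(gX,False),(gY,False)]" "[(gX,False),(gX,False),(gX,False)]" "[]" "[(gY,True),(gX,False),(gY,False),(gX,True),(gX,True),(gX,True)]"] by (simp add: G_rels_def)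
lemma rho5: "pres_class G_rels [(gX,False),(gY,False),(gX,True),(gX,True),(gX,True),(gY,True)] = \<one>\<^bsub>G6\<^esub>"
  using rot_class[of "[(gY,True),(gX,False),(gY,False)]" "[(gX,False),(gX,False),(gX,False)]" "[(gY,True)]" "[(gX,False),(gY,False),(gX,True),(gX,True),(gX,True)]"] by (simp add: G_rels_def)
lemma rho6: "pres_class G_rels [(gY,False),(gX,True),(gX,True),(gX,True),(gY,True),(gX,False)] = \<one>\<^bsub>G6\<^esub>"
  using rot_class[of "[(gY,True),(gX,False),(gY,False)]" "[(gX,False),(gX,False),(gX,False)]" "[(gY,True),(gX,False)]" "[(gY,False),(gX,True),(gX,True),(gX,True)]"] by (simp add: G_rels_def)
lemma rho7: "pres_class G_rels [(gX,True),(gX,True),(gX,True),(gY,True),(gX,False),(gY,False)] = \<one>\<^bsub>G6\<^esub>"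
  using rot_class[of "[(gY,True),(gX,False),(gY,False)]" "[(gX,False),(gX,False),(gX,False)]" "[(gY,True),(gX,False),(gY,False)]" "[(gX,True),(gX,True),(gX,True)]"] by (simp add: G_rels_def)
lemma rho8: "pres_class G_rels [(gX,True),(gX,True),(gY,True),(gX,False),(gY,False),(gX,True)] = \<one>\<^bsub>G6\<^esub>"
  using rot_class[of "[(gY,True),(gX,False),(gY,False)]" "[(gX,False),(gX,False),(gX,False)]" "[(gY,True),(gX,False),(gY,False),(gX,True)]" "[(gX,True),(gX,True)]"] by (simp add: G_rels_def)
lemma rho9: "pres_class G_rels [(gX,True),(gY,True),(gX,False),(gY,False),(gX,True),(gX,True)] = \<one>\<^bsub>G6\<^esub>"
  using rot_class[of "[(gY,True),(gX,False),(gY,False)]" "[(gX,False),(gX,False),(gX,False)]" "[(gY,True),(gX,False),(gY,False),(gX,True),(gX,True)]" "[(gX,True)]"] by (simp add: G_rels_def)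
lemma rho10: "pres_class G_rels [(gW,True),(gZ,False),(gW,False),(gZ,True),(gZ,True),(gZ,True)] = \<one>\<^bsub>G6\<^esub>"
  using rot_class[of "[(gW,True),(gZ,False),(gW,False)]" "[(gZ,False),(gZ,False),(gZ,False)]" "[]" "[(gW,True),(gZ,False),(gW,False),(gZ,True),(gZ,True),(gZ,True)]"] by (simp add: G_rels_def)
lemma rho11: "pres_class G_rels [(gZ,False),(gW,False),(gZ,True),(gZ,True),(gZ,True),(gW,True)] = \<one>\<^bsub>G6\<^esub>"
  using rot_class[of "[(gW,True),(gZ,False),(gW,False)]" "[(gZ,False),(gZ,False),(gZ,False)]" "[(gW,True)]" "[(gZ,False),(gW,False),(gZ,True),(gZ,True),(gZ,True)]"] by (simp add: G_rels_def)
lemma rho12: "pres_class G_rels [(gW,False),(gZ,True),(gZ,True),(gZ,True),(gW,True),(gZ,False)] = \<one>\<^bsub>G6\<^esub>"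
  using rot_class[of "[(gW,True),(gZ,False),(gW,False)]" "[(gZ,False),(gZ,False),(gZ,False)]" "[(gW,True),(gZ,False)]" "[(gW,False),(gZ,True),(gZ,True),(gZ,True)]"] by (simp add: G_rels_def)
lemma rho13: "pres_class G_rels [(gZ,True),(gZ,True),(gZ,True),(gW,True),(gZ,False),(gW,False)] = \<one>\<^bsub>G6\<^esub>"
  using rot_class[of "[(gW,True),(gZ,False),(gW,False)]" "[(gZ,False),(gZ,False),(gZ,False)]" "[(gW,True),(gZ,False),(gW,False)]" "[(gZ,True),(gZ,True),(gZ,True)]"] by (simp add: G_rels_def)
lemma rho14: "pres_class G_rels [(gZ,True),(gZ,True),(gW,True),(gZ,False),(gW,False),(gZ,True)] = \<one>\<^bsub>G6\<^esub>"
  using rot_class[of "[(gW,True),(gZ,False),(gW,False)]" "[(gZ,False),(gZ,False),(gZ,False)]" "[(gW,True),(gZ,False),(gW,False),(gZ,True)]" "[(gZ,True),(gZ,True)]"] by (simp add: G_rels_def)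
lemma rho15: "pres_class G_rels [(gZ,True),(gW,True),(gZ,False),(gW,False),(gZ,True),(gZ,True)] = \<one>\<^bsub>G6\<^esub>"
  using rot_class[of "[(gW,True),(gZ,False),(gW,False)]" "[(gZ,False),(gZ,False),(gZ,False)]" "[(gW,True),(gZ,False),(gW,False),(gZ,True),(gZ,True)]" "[(gZ,True)]"] by (simp add: G_rels_def)
lemma rho16: "pres_class G_rels [(gX,True),(gZ,True),(gX,False),(gZ,False),(gZ,True),(gZ,True),(gX,True),(gX,True)] = \<one>\<^bsub>G6\<^esub>"
  using rot_class[of "[(gX,True),(gZ,True),(gX,False),(gZ,False)]" "[(gX,False),(gX,False),(gZ,False),(gZ,False)]" "[]" "[(gX,True),(gZ,True),(gX,False),(gZ,False),(gZ,True),(gZ,True),(gX,True),(gX,True)]"] by (simp add: G_rels_def)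
lemma rho17: "pres_class G_rels [(gZ,True),(gX,False),(gZ,False),(gZ,True),(gZ,True),(gX,True),(gX,True),(gX,True)] = \<one>\<^bsub>G6\<^esub>"
  using rot_class[of "[(gX,True),(gZ,True),(gX,False),(gZ,False)]" "[(gX,False),(gX,False),(gZ,False),(gZ,False)]" "[(gX,True)]" "[(gZ,True),(gX,False),(gZ,False),(gZ,True),(gZ,True),(gX,True),(gX,True)]"] by (simp add: G_rels_def)
lemma rho18: "pres_class G_rels [(gX,False),(gZ,False),(gZ,True),(gZ,True),(gX,True),(gX,True),(gX,True),(gZ,True)] = \<one>\<^bsub>G6\<^esub>"
  using rot_class[of "[(gX,True),(gZ,True),(gX,False),(gZ,False)]" "[(gX,False),(gX,False),(gZ,False),(gZ,False)]" "[(gX,True),(gZ,True)]" "[(gX,False),(gZ,False),(gZ,True),(gZ,True),(gX,True),(gX,True)]"] by (simp add: G_rels_def)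
lemma rho19: "pres_class G_rels [(gZ,False),(gZ,True),(gZ,True),(gX,True),(gX,True),(gX,True),(gZ,True),(gX,False)] = \<one>\<^bsub>G6\<^esub>"
  using rot_class[of "[(gX,True),(gZ,True),(gX,False),(gZ,False)]" "[(gX,False),(gX,False),(gZ,False),(gZ,False)]" "[(gX,True),(gZ,True),(gX,False)]" "[(gZ,False),(gZ,True),(gZ,True),(gX,True),(gX,True)]"] by (simp add: G_rels_def)
lemma rho20: "pres_class G_rels [(gZ,True),(gZ,True),(gX,True),(gX,True),(gX,True),(gZ,True),(gX,False),(gZ,False)] = \<one>\<^bsub>G6\<^esub>"
  using rot_class[of "[(gX,True),(gZ,True),(gX,False),(gZ,False)]" "[(gX,False),(gX,False),(gZ,False),(gZ,False)]" "[(gX,True),(gZ,True),(gX,False),(gZ,False)]" "[(gZ,True),(gZ,True),(gX,True),(gX,True)]"] by (simp add: G_rels_def)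
lemma rho21: "pres_class G_rels [(gZ,True),(gX,True),(gX,True),(gX,True),(gZ,True),(gX,False),(gZ,False),(gZ,True)] = \<one>\<^bsub>G6\<^esub>"
  using rot_class[of "[(gX,True),(gZ,True),(gX,False),(gZ,False)]" "[(gX,False),(gX,False),(gZ,False),(gZ,False)]" "[(gX,True),(gZ,True),(gX,False),(gZ,False),(gZ,True)]" "[(gZ,True),(gX,True),(gX,True)]"] by (simp add: G_rels_def)
lemma rho22: "pres_class G_rels [(gX,True),(gX,True),(gX,True),(gZ,True),(gX,False),(gZ,False),(gZ,True),(gZ,True)] = \<one>\<^bsub>G6\<^esub>"
  using rot_class[of "[(gX,True),(gZ,True),(gX,False),(gZ,False)]" "[(gX,False),(gX,False),(gZ,False),(gZ,False)]" "[(gX,True),(gZ,True),(gX,False),(gZ,False),(gZ,True),(gZ,True)]" "[(gX,True),(gX,True)]"] by (simp add: G_rels_def)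
lemma rho23: "pres_class G_rels [(gX,True),(gX,True),(gZ,True),(gX,False),(gZ,False),(gZ,True),(gZ,True),(gX,True)] = \<one>\<^bsub>G6\<^esub>"
  using rot_class[of "[(gX,True),(gZ,True),(gX,False),(gZ,False)]" "[(gX,False),(gX,False),(gZ,False),(gZ,False)]" "[(gX,True),(gZ,True),(gX,False),(gZ,False),(gZ,True),(gZ,True),(gX,True)]" "[(gX,True)]"] by (simp add: G_rels_def)
lemma rho24: "pres_class G_rels [(gZ,True),(gY,True),(gZ,False),(gY,False),(gX,True),(gX,True),(gX,True),(gX,True)] = \<one>\<^bsub>G6\<^esub>"
  using rot_class[of "[(gZ,True),(gY,True),(gZ,False),(gY,False)]" "[(gX,False),(gX,False),(gX,False),(gX,False)]" "[]" "[(gZ,True),(gY,True),(gZ,False),(gY,False),(gX,True),(gX,True),(gX,True),(gX,True)]"] by (simp add: G_rels_def)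
lemma rho25: "pres_class G_rels [(gY,True),(gZ,False),(gY,False),(gX,True),(gX,True),(gX,True),(gX,True),(gZ,True)] = \<one>\<^bsub>G6\<^esub>"
  using rot_class[of "[(gZ,True),(gY,True),(gZ,False),(gY,False)]" "[(gX,False),(gX,False),(gX,False),(gX,False)]" "[(gZ,True)]" "[(gY,True),(gZ,False),(gY,False),(gX,True),(gX,True),(gX,True),(gX,True)]"] by (simp add: G_rels_def)
lemma rho26: "pres_class G_rels [(gZ,False),(gY,False),(gX,True),(gX,True),(gX,True),(gX,True),(gZ,True),(gY,True)] = \<one>\<^bsub>G6\<^esub>"
  using rot_class[of "[(gZ,True),(gY,True),(gZ,False),(gY,False)]" "[(gX,False),(gX,False),(gX,False),(gX,False)]" "[(gZ,True),(gY,True)]" "[(gZ,False),(gY,False),(gX,True),(gX,True),(gX,True),(gX,True)]"] by (simp add: G_rels_def)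
lemma rho27: "pres_class G_rels [(gY,False),(gX,True),(gX,True),(gX,True),(gX,True),(gZ,True),(gY,True),(gZ,False)] = \<one>\<^bsub>G6\<^esub>"
  using rot_class[of "[(gZ,True),(gY,True),(gZ,False),(gY,False)]" "[(gX,False),(gX,False),(gX,False),(gX,False)]" "[(gZ,True),(gY,True),(gZ,False)]" "[(gY,False),(gX,True),(gX,True),(gX,True),(gX,True)]"] by (simp add: G_rels_def)
lemma rho28: "pres_class G_rels [(gX,True),(gX,True),(gX,True),(gX,True),(gZ,True),(gY,True),(gZ,False),(gY,False)] = \<one>\<^bsub>G6\<^esub>"
  using rot_class[of "[(gZ,True),(gY,True),(gZ,False),(gY,False)]" "[(gX,False),(gX,False),(gX,False),(gX,False)]" "[(gZ,True),(gY,True),(gZ,False),(gY,False)]" "[(gX,True),(gX,True),(gX,True),(gX,True)]"] by (simp add: G_rels_def)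
lemma rho29: "pres_class G_rels [(gX,True),(gX,True),(gX,True),(gZ,True),(gY,True),(gZ,False),(gY,False),(gX,True)] = \<one>\<^bsub>G6\<^esub>"
  using rot_class[of "[(gZ,True),(gY,True),(gZ,False),(gY,False)]" "[(gX,False),(gX,False),(gX,False),(gX,False)]" "[(gZ,True),(gY,True),(gZ,False),(gY,False),(gX,True)]" "[(gX,True),(gX,True),(gX,True)]"] by (simp add: G_rels_def)
lemma rho30: "pres_class G_rels [(gX,True),(gX,True),(gZ,True),(gY,True),(gZ,False),(gY,False),(gX,True),(gX,True)] = \<one>\<^bsub>G6\<^esub>"
  using rot_class[of "[(gZ,True),(gY,True),(gZ,False),(gY,False)]" "[(gX,False),(gX,False),(gX,False),(gX,False)]" "[(gZ,True),(gY,True),(gZ,False),(gY,False),(gX,True),(gX,True)]" "[(gX,True),(gX,True)]"] by (simp add: G_rels_def)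
lemma rho31: "pres_class G_rels [(gX,True),(gZ,True),(gY,True),(gZ,False),(gY,False),(gX,True),(gX,True),(gX,True)] = \<one>\<^bsub>G6\<^esub>"
  using rot_class[of "[(gZ,True),(gY,True),(gZ,False),(gY,False)]" "[(gX,False),(gX,False),(gX,False),(gX,False)]" "[(gZ,True),(gY,True),(gZ,False),(gY,False),(gX,True),(gX,True),(gX,True)]" "[(gX,True)]"] by (simp add: G_rels_def)
lemma rho32: "pres_class G_rels [(gX,True),(gW,True),(gX,False),(gW,False),(gZ,True),(gZ,True),(gZ,True),(gZ,True)] = \<one>\<^bsub>G6\<^esub>"
  using rot_class[of "[(gX,True),(gW,True),(gX,False),(gW,False)]" "[(gZ,False),(gZ,False),(gZ,False),(gZ,False)]" "[]" "[(gX,True),(gW,True),(gX,False),(gW,False),(gZ,True),(gZ,True),(gZ,True),(gZ,True)]"] by (simp add: G_rels_def)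
lemma rho33: "pres_class G_rels [(gW,True),(gX,False),(gW,False),(gZ,True),(gZ,True),(gZ,True),(gZ,True),(gX,True)] = \<one>\<^bsub>G6\<^esub>"
  using rot_class[of "[(gX,True),(gW,True),(gX,False),(gW,False)]" "[(gZ,False),(gZ,False),(gZ,False),(gZ,False)]" "[(gX,True)]" "[(gW,True),(gX,False),(gW,False),(gZ,True),(gZ,True),(gZ,True),(gZ,True)]"] by (simp add: G_rels_def)
lemma rho34: "pres_class G_rels [(gX,False),(gW,False),(gZ,True),(gZ,True),(gZ,True),(gZ,True),(gX,True),(gW,True)] = \<one>\<^bsub>G6\<^esub>"
  using rot_class[of "[(gX,True),(gW,True),(gX,False),(gW,False)]" "[(gZ,False),(gZ,False),(gZ,False),(gZ,False)]" "[(gX,True),(gW,True)]" "[(gX,False),(gW,False),(gZ,True),(gZ,True),(gZ,True),(gZ,True)]"] by (simp add: G_rels_def)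
lemma rho35: "pres_class G_rels [(gW,False),(gZ,True),(gZ,True),(gZ,True),(gZ,True),(gX,True),(gW,True),(gX,False)] = \<one>\<^bsub>G6\<^esub>"
  using rot_class[of "[(gX,True),(gW,True),(gX,False),(gW,False)]" "[(gZ,False),(gZ,False),(gZ,False),(gZ,False)]" "[(gX,True),(gW,True),(gX,False)]" "[(gW,False),(gZ,True),(gZ,True),(gZ,True),(gZ,True)]"] by (simp add: G_rels_def)
lemma rho36: "pres_class G_rels [(gZ,True),(gZ,True),(gZ,True),(gZ,True),(gX,True),(gW,True),(gX,False),(gW,False)] = \<one>\<^bsub>G6\<^esub>"
  using rot_class[of "[(gX,True),(gW,True),(gX,False),(gW,False)]" "[(gZ,False),(gZ,False),(gZ,False),(gZ,False)]" "[(gX,True),(gW,True),(gX,False),(gW,False)]" "[(gZ,True),(gZ,True),(gZ,True),(gZ,True)]"] by (simp add: G_rels_def)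
lemma rho37: "pres_class G_rels [(gZ,True),(gZ,True),(gZ,True),(gX,True),(gW,True),(gX,False),(gW,False),(gZ,True)] = \<one>\<^bsub>G6\<^esub>"
  using rot_class[of "[(gX,True),(gW,True),(gX,False),(gW,False)]" "[(gZ,False),(gZ,False),(gZ,False),(gZ,False)]" "[(gX,True),(gW,True),(gX,False),(gW,False),(gZ,True)]" "[(gZ,True),(gZ,True),(gZ,True)]"] by (simp add: G_rels_def)
lemma rho38: "pres_class G_rels [(gZ,True),(gZ,True),(gX,True),(gW,True),(gX,False),(gW,False),(gZ,True),(gZ,True)] = \<one>\<^bsub>G6\<^esub>"
  using rot_class[of "[(gX,True),(gW,True),(gX,False),(gW,False)]" "[(gZ,False),(gZ,False),(gZ,False),(gZ,False)]" "[(gX,True),(gW,True),(gX,False),(gW,False),(gZ,True),(gZ,True)]" "[(gZ,True),(gZ,True)]"] by (simp add: G_rels_def)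
lemma rho39: "pres_class G_rels [(gZ,True),(gX,True),(gW,True),(gX,False),(gW,False),(gZ,True),(gZ,True),(gZ,True)] = \<one>\<^bsub>G6\<^esub>"
  using rot_class[of "[(gX,True),(gW,True),(gX,False),(gW,False)]" "[(gZ,False),(gZ,False),(gZ,False),(gZ,False)]" "[(gX,True),(gW,True),(gX,False),(gW,False),(gZ,True),(gZ,True),(gZ,True)]" "[(gZ,True)]"] by (simp add: G_rels_def)
lemma rho40: "pres_class G_rels [(gY,True),(gW,True),(gY,False),(gW,False)] = \<one>\<^bsub>G6\<^esub>"
  using rot_class[of "[(gY,True),(gW,True),(gY,False),(gW,False)]" "[]" "[]" "[(gY,True),(gW,True),(gY,False),(gW,False)]"] by (simp add: G_rels_def)
lemma rho41: "pres_class G_rels [(gW,True),(gY,False),(gW,False),(gY,True)] = \<one>\<^bsub>G6\<^esub>"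
  using rot_class[of "[(gY,True),(gW,True),(gY,False),(gW,False)]" "[]" "[(gY,True)]" "[(gW,True),(gY,False),(gW,False)]"] by (simp add: G_rels_def)
lemma rho42: "pres_class G_rels [(gY,False),(gW,False),(gY,True),(gW,True)] = \<one>\<^bsub>G6\<^esub>"
  using rot_class[of "[(gY,True),(gW,True),(gY,False),(gW,False)]" "[]" "[(gY,True),(gW,True)]" "[(gY,False),(gW,False)]"] by (simp add: G_rels_def)
lemma rho43: "pres_class G_rels [(gW,False),(gY,True),(gW,True),(gY,False)] = \<one>\<^bsub>G6\<^esub>"
  using rot_class[of "[(gY,True),(gW,True),(gY,False),(gW,False)]" "[]" "[(gY,True),(gW,True),(gY,False)]" "[(gW,False)]"] by (simp add: G_rels_def)

definition HH :: "gen4 word set set" where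
  "HH = generate G6 {pres_gen G_rels gX, pres_gen G_rels gY}"

lemma pres_gen_L: "pres_gen G_rels g = L (g, False)"
  by (simp add: pres_gen_def L_def)

lemma HH_sub: "subgroup HH G6"
  unfolding HH_def by (rule G6.generate_is_subgroup) (simp add: pres_gen_def)

lemma subH0: "HH #>\<^bsub>G6\<^esub> L (gX, False) = HH"
  using subgroup.rcos_const[OF HH_sub G6_group] generate.incl[of _ "{pres_gen G_rels gX, pres_gen G_rels gY}" G6]
  unfolding HH_def pres_gen_L by simp
lemma subH1: "HH #>\<^bsub>G6\<^esub> L (gY, False) = HH"
  using subgroup.rcos_const[OF HH_sub G6_group] generate.incl[of _ "{pres_gen G_rels gX, pres_gen G_rels gY}" G6]
  unfolding HH_def pres_gen_L by simp

lemma oneH: "\<one>\<^bsub>G6\<^esub> \<in> HH"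
  unfolding HH_def by (rule generate.one)

lemma x8: "L (g, False) [^]\<^bsub>G6\<^esub> (n::nat) = pres_class G_rels (replicate n (g, False))"
  by (simp add: L_def G6_pow concat_rep1)

lemma sd_H: "HH \<subseteq> (\<lambda>(i, j). L (gX,False) [^]\<^bsub>G6\<^esub> i \<otimes>\<^bsub>G6\<^esub> L (gY,False) [^]\<^bsub>G6\<^esub> j) ` ({..<8::nat} \<times> {..<2::nat})"
  unfolding HH_def pres_gen_L
proof (rule G6.sd_gen)
  show "L (gX, False) [^]\<^bsub>G6\<^esub> (8::nat) = \<one>\<^bsub>G6\<^esub>"
    unfolding x8 G6_one by (rule rel_class) (simp add: G_rels_def)
  show "L (gY, False) [^]\<^bsub>G6\<^esub> (2::nat) = \<one>\<^bsub>G6\<^esub>"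
    unfolding x8 G6_one by (rule rel_class) (simp add: G_rels_def)
  show "inv\<^bsub>G6\<^esub> L (gY, False) \<otimes>\<^bsub>G6\<^esub> L (gX, False) \<otimes>\<^bsub>G6\<^esub> L (gY, False) = L (gX, False) [^]\<^bsub>G6\<^esub> (3::nat)"
    unfolding x8 by (simp add: L_def G6_inv G6_mult) (rule rel_class, simp add: G_rels_def)
qed auto

lemma PH: "Pc HH"
proof -
  have "card ((\<lambda>(i, j). L (gX,False) [^]\<^bsub>G6\<^esub> i \<otimes>\<^bsub>G6\<^esub> L (gY,False) [^]\<^bsub>G6\<^esub> j) ` ({..<8::nat} \<times> {..<2::nat})) \<le> 16"
    using card_image_le[of "{..<8::nat} \<times> {..<2::nat}"] by fastforce
  then show ?thesis unfolding Pc_def using sd_H subgroup.subset[OF HH_sub]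
    by (meson card_mono dual_order.trans finite_SigmaI finite_imageI finite_lessThan finite_subset)
qed

lemma inv_letter: "\<exists>n::nat. L (g, True) = L (g, False) [^]\<^bsub>G6\<^esub> n"
proof -
  have key: "\<exists>n::nat. L (g, True) = L (g, False) [^]\<^bsub>G6\<^esub> n" if "(replicate (Suc k) (g, False), []) \<in> G_rels" for k
  proof -
    have "pres_eq G_rels ([(g, True)] @ replicate (Suc k) (g, False) @ []) ([(g, True)] @ [] @ [])"
      by (rule pres_eq.rel[OF that])
    moreover have "pres_eq G_rels ([] @ [(g, True), (g, \<not> True)] @ replicate k (g, False)) ([] @ replicate k (g, False))"
      by (rule pres_eq.cancel)
    ultimately have "pres_eq G_rels [(g, True)] (replicate k (g, False))"
      by simp (meson pres_eq.sym pres_eq.trans)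
    then have "L (g, True) = L (g, False) [^]\<^bsub>G6\<^esub> k" using x8[of g k] by (simp add: L_def pres_class_eq)
    then show ?thesis by blast
  qed
  show ?thesis
  proof (cases g)
    case gX then show ?thesis using key[of 7] by (simp add: G_rels_def)
  next
    case gY then show ?thesis using key[of 1] by (simp add: G_rels_def)
  next
    case gZ then show ?thesis using key[of 7] by (simp add: G_rels_def)
  next
    case gW then show ?thesis using key[of 1] by (simp add: G_rels_def)
  qed
qed

lemma cover:
  assumes pl: "\<forall>A\<in>set As. Pc A"
    and cl: "list_all (\<lambda>A. list_all (\<lambda>g. A #>\<^bsub>G6\<^esub> L (g, False) \<in> set As) [gX, gY, gZ, gW]) As"
    and o: "\<exists>A\<in>set As. \<one>\<^bsub>G6\<^esub> \<in> A"
  shows "finite (carrier G6) \<and> card (carrier G6) \<le> 16 * length As"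
proof -
  let ?U = "\<Union>(set As)"
  have Uc: "?U \<subseteq> carrier G6" using pl by (auto simp: Pc_def)
  have stepF: "a \<otimes>\<^bsub>G6\<^esub> L (g, False) \<in> ?U" if a: "a \<in> ?U" for a g
  proof -
    from a obtain A where A: "A \<in> set As" "a \<in> A" by auto
    have "A #>\<^bsub>G6\<^esub> L (g, False) \<in> set As" using cl A(1) by (cases g) (auto simp: list_all_iff)
    moreover have "a \<otimes>\<^bsub>G6\<^esub> L (g, False) \<in> A #>\<^bsub>G6\<^esub> L (g, False)"
      using A pl by (intro G6.rcosI) (auto simp: Pc_def)
    ultimately show ?thesis by auto
  qed
  have stepP: "a \<otimes>\<^bsub>G6\<^esub> L (g, False) [^]\<^bsub>G6\<^esub> (n::nat) \<in> ?U" if a: "a \<in> ?U" for a g n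
  proof (induction n)
    case 0
    have "a \<in> carrier G6" using a Uc by auto
    then show ?case using a by simp
  next
    case (Suc n)
    have "a \<in> carrier G6" using a Uc by auto
    then have "a \<otimes>\<^bsub>G6\<^esub> L (g, False) [^]\<^bsub>G6\<^esub> Suc n = (a \<otimes>\<^bsub>G6\<^esub> L (g, False) [^]\<^bsub>G6\<^esub> n) \<otimes>\<^bsub>G6\<^esub> L (g, False)"
      by (simp add: G6.m_assoc)
    then show ?case using stepF[OF Suc] by simp
  qed
  have step: "a \<otimes>\<^bsub>G6\<^esub> L l \<in> ?U" if a: "a \<in> ?U" for a l
  proof -
    obtain g b where l: "l = (g, b)" by (cases l)
    show ?thesis
    proof (cases b)
      case True
      obtain n :: nat where "L (g, True) = L (g, False) [^]\<^bsub>G6\<^esub> n" using inv_letter by blast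
      then show ?thesis using stepP[OF a] l True by simp
    next
      case False then show ?thesis using stepF[OF a] l by simp
    qed
  qed
  have "pres_class G_rels u \<in> ?U" for u
  proof (induction u rule: rev_induct)
    case Nil then show ?case using o by (auto simp: G6_one)
  next
    case (snoc l u)
    have "pres_class G_rels (u @ [l]) = pres_class G_rels u \<otimes>\<^bsub>G6\<^esub> L l" by (simp add: L_def G6_mult)
    then show ?case using step[OF snoc] by simp
  qed
  then have cU: "carrier G6 \<subseteq> ?U" by (auto simp: G6_carrier)
  have fin: "\<forall>A\<in>set As. finite A" using pl by (auto simp: Pc_def)
  have finU: "finite ?U" using fin by auto
  have "card (carrier G6) \<le> card ?U"
    by (rule card_mono[OF _ cU]) (use fin in auto)
  also have "... \<le> sum card (set As)" using card_Union_le_sum_card fin by blast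
  also have "... \<le> card (set As) * 16"
    using sum_bounded_above[of "set As" card 16] pl by (auto simp: Pc_def)
  also have "... \<le> 16 * length As" using card_length[of As] by simp
  finally show ?thesis using finite_subset[OF cU finU] by simp
qed

lemma card_le_256: "finite (carrier G6) \<and> card (carrier G6) \<le> 256"
proof -
  define c0 where "c0 = HH"
  have p0: "Pc c0" unfolding c0_def by (rule PH)
  note f1 = subH0[folded c0_def]
  note f2 = flipF[OF f1 p0]
  note f3 = subH1[folded c0_def]
  note f4 = flipF[OF f3 p0]
  define c1 where "c1 = c0 #>\<^bsub>G6\<^esub> L (gZ,False)"
  have p1: "Pc c1" unfolding c1_def by (rule Pstep[OF p0])
  note f5 = c1_def[symmetric]
  note f6 = flipF[OF f5 p0]
  define c2 where "c2 = c0 #>\<^bsub>G6\<^esub> L (gZ,True)"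
  have p2: "Pc c2" unfolding c2_def by (rule Pstep[OF p0])
  note f7 = c2_def[symmetric]
  note f8 = flipT[OF f7 p0]
  note f9 = flipF[OF f8 p2]
  note f10 = flipF[OF f1 p0]
  note f11 = flipF[OF f1 p0]
  note f12 = flipF[OF f1 p0]
  note f13 = flipF[OF f1 p0]
  note f14 = flipT[OF f4 p0]
  note f15 = flipT[OF f7 p0]
  note f16 = pcons[OF f15 pcons[OF f14 pcons[OF f13 pcons[OF f12 pcons[OF f11 pcons[OF f10 pcons[OF f9 pnil[OF p2] p0] p0] p0] p0] p0] p0] p2]
  note f17 = ded[OF rho25 f16 p2 p2]
  note f18 = flipT[OF f17 p2]
  define c3 where "c3 = c0 #>\<^bsub>G6\<^esub> L (gW,False)"
  have p3: "Pc c3" unfolding c3_def by (rule Pstep[OF p0])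
  note f19 = c3_def[symmetric]
  note f20 = flipF[OF f19 p0]
  note f21 = flipT[OF f20 p3]
  note f22 = pcons[OF f21 pnil[OF p3] p0]
  note f23 = ded[OF rho3 f22 p3 p0]
  note f24 = flipF[OF f23 p3]
  note f25 = flipT[OF f20 p3]
  note f26 = flipT[OF f4 p0]
  note f27 = flipF[OF f19 p0]
  note f28 = pcons[OF f27 pcons[OF f26 pcons[OF f25 pnil[OF p3] p0] p0] p3]
  note f29 = ded[OF rho40 f28 p3 p3]
  note f30 = flipT[OF f29 p3]
  define c4 where "c4 = c1 #>\<^bsub>G6\<^esub> L (gX,False)"
  have p4: "Pc c4" unfolding c4_def by (rule Pstep[OF p1])
  note f31 = c4_def[symmetric]
  note f32 = flipF[OF f31 p1]
  define c5 where "c5 = c1 #>\<^bsub>G6\<^esub> L (gX,True)"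
  have p5: "Pc c5" unfolding c5_def by (rule Pstep[OF p1])
  note f33 = c5_def[symmetric]
  note f34 = flipT[OF f33 p1]
  define c6 where "c6 = c1 #>\<^bsub>G6\<^esub> L (gY,False)"
  have p6: "Pc c6" unfolding c6_def by (rule Pstep[OF p1])
  note f35 = c6_def[symmetric]
  note f36 = flipF[OF f35 p1]
  note f37 = flipT[OF f36 p6]
  note f38 = pcons[OF f37 pnil[OF p6] p1]
  note f39 = ded[OF rho1 f38 p6 p1]
  note f40 = flipF[OF f39 p6]
  define c7 where "c7 = c1 #>\<^bsub>G6\<^esub> L (gZ,False)"
  have p7: "Pc c7" unfolding c7_def by (rule Pstep[OF p1])
  note f41 = c7_def[symmetric]
  note f42 = flipF[OF f41 p1]
  note f43 = flipF[OF f8 p2]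
  note f44 = flipF[OF f1 p0]
  note f45 = flipF[OF f1 p0]
  note f46 = flipF[OF f1 p0]
  note f47 = flipF[OF f5 p0]
  note f48 = flipF[OF f41 p1]
  note f49 = flipT[OF f42 p7]
  note f50 = pcons[OF f49 pcons[OF f48 pcons[OF f47 pcons[OF f46 pcons[OF f45 pcons[OF f44 pcons[OF f43 pnil[OF p2] p0] p0] p0] p0] p1] p7] p1]
  note f51 = ded[OF rho18 f50 p2 p1]
  note f52 = flipF[OF f51 p2]
  note f53 = HOL.trans[OF HOL.sym[OF f52] f33]
  note f54 = HOL.sym[OF f53]
  note f55 = tr1[OF f34 f54]
  note f56 = tr2[OF f33 f54]
  note f57 = flipT[OF f36 p6]
  note f58 = flipT[OF f56 p1]
  note f59 = flipF[OF f18 p2]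
  note f60 = flipF[OF f51 p2]
  note f61 = flipF[OF f31 p1]
  note f62 = pcons[OF f61 pcons[OF f60 pcons[OF f59 pcons[OF f58 pcons[OF f57 pnil[OF p6] p1] p2] p2] p1] p4]
  note f63 = ded[OF rho7 f62 p6 p4]
  note f64 = flipT[OF f63 p6]
  note f65 = flipF[OF f8 p2]
  note f66 = flipF[OF f5 p0]
  note f67 = flipT[OF f6 p1]
  note f68 = flipT[OF f2 p0]
  note f69 = flipF[OF f5 p0]
  note f70 = flipF[OF f31 p1]
  note f71 = flipF[OF f64 p4]
  note f72 = pcons[OF f71 pcons[OF f70 pcons[OF f69 pcons[OF f68 pcons[OF f67 pcons[OF f66 pcons[OF f65 pnil[OF p2] p0] p1] p0] p0] p1] p4] p6]
  note f73 = ded[OF rho22 f72 p2 p6]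
  note f74 = flipT[OF f73 p2]
  note f75 = flipF[OF f64 p4]
  note f76 = flipF[OF f74 p6]
  note f77 = flipF[OF f51 p2]
  note f78 = flipT[OF f40 p1]
  note f79 = flipT[OF f63 p6]
  note f80 = pcons[OF f79 pcons[OF f78 pcons[OF f77 pcons[OF f76 pcons[OF f75 pnil[OF p4] p6] p2] p1] p6] p4]
  note f81 = ded[OF rho4 f80 p4 p4]
  note f82 = flipT[OF f81 p4]
  note f83 = flipF[OF f74 p6]
  note f84 = flipF[OF f51 p2]
  note f85 = flipF[OF f31 p1]
  note f86 = flipF[OF f64 p4]
  note f87 = flipT[OF f36 p6]
  note f88 = flipT[OF f6 p1]
  note f89 = flipF[OF f3 p0]
  note f90 = pcons[OF f89 pcons[OF f88 pcons[OF f87 pcons[OF f86 pcons[OF f85 pcons[OF f84 pcons[OF f83 pnil[OF p6] p2] p1] p4] p6] p1] p0] p0]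
  note f91 = ded[OF rho24 f90 p6 p0]
  note f92 = flipT[OF f91 p6]
  note f93 = HOL.trans[OF HOL.sym[OF f92] f5]
  note f94 = tr1[OF f74 f93]
  note f95 = HOL.trans[OF HOL.sym[OF f94] f31]
  note f96 = tr1[OF f63 f93]
  note f97 = HOL.trans[OF HOL.sym[OF f96] f56]
  note f98 = tr1[OF f39 f93]
  note f99 = tr2[OF f35 f93]
  note f100 = tr1[OF f36 f93]
  note f101 = tr2[OF f40 f93]
  note f102 = tr1[OF f91 f93]
  note f103 = tr1[OF f64 f97]
  note f104 = tr2[OF f103 f93]
  note f105 = tr1[OF f32 f97]
  note f106 = tr2[OF f73 f93]
  note f107 = tr1[OF f82 f97]
  note f108 = tr2[OF f107 f97]
  note f109 = tr1[OF f81 f97]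
  note f110 = tr2[OF f109 f97]
  note f111 = tr2[OF f31 f97]
  define c8 where "c8 = c1 #>\<^bsub>G6\<^esub> L (gW,False)"
  have p8: "Pc c8" unfolding c8_def by (rule Pstep[OF p1])
  note f112 = c8_def[symmetric]
  note f113 = flipF[OF f112 p1]
  note f114 = flipT[OF f113 p8]
  note f115 = pcons[OF f114 pnil[OF p8] p1]
  note f116 = ded[OF rho3 f115 p8 p1]
  note f117 = flipF[OF f116 p8]
  note f118 = flipT[OF f113 p8]
  note f119 = flipT[OF f101 p1]
  note f120 = flipF[OF f112 p1]
  note f121 = pcons[OF f120 pcons[OF f119 pcons[OF f118 pnil[OF p8] p1] p1] p8]
  note f122 = ded[OF rho40 f121 p8 p8]
  note f123 = flipT[OF f122 p8]
  define c9 where "c9 = c2 #>\<^bsub>G6\<^esub> L (gZ,True)"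
  have p9: "Pc c9" unfolding c9_def by (rule Pstep[OF p2])
  note f124 = c9_def[symmetric]
  note f125 = flipT[OF f124 p2]
  note f126 = flipF[OF f125 p9]
  note f127 = flipF[OF f51 p2]
  note f128 = flipF[OF f111 p1]
  note f129 = flipF[OF f51 p2]
  note f130 = flipF[OF f111 p1]
  note f131 = flipT[OF f17 p2]
  note f132 = flipT[OF f124 p2]
  note f133 = pcons[OF f132 pcons[OF f131 pcons[OF f130 pcons[OF f129 pcons[OF f128 pcons[OF f127 pcons[OF f126 pnil[OF p9] p2] p1] p2] p1] p2] p2] p9]
  note f134 = ded[OF rho25 f133 p9 p9]
  note f135 = flipT[OF f134 p9]
  define c10 where "c10 = c2 #>\<^bsub>G6\<^esub> L (gW,False)"
  have p10: "Pc c10" unfolding c10_def by (rule Pstep[OF p2])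
  note f136 = c10_def[symmetric]
  note f137 = flipF[OF f136 p2]
  note f138 = flipT[OF f137 p10]
  note f139 = pcons[OF f138 pnil[OF p10] p2]
  note f140 = ded[OF rho3 f139 p10 p2]
  note f141 = flipF[OF f140 p10]
  note f142 = flipT[OF f137 p10]
  note f143 = flipT[OF f17 p2]
  note f144 = flipF[OF f136 p2]
  note f145 = pcons[OF f144 pcons[OF f143 pcons[OF f142 pnil[OF p10] p2] p2] p10]
  note f146 = ded[OF rho40 f145 p10 p10]
  note f147 = flipT[OF f146 p10]
  define c11 where "c11 = c3 #>\<^bsub>G6\<^esub> L (gX,False)"
  have p11: "Pc c11" unfolding c11_def by (rule Pstep[OF p3])
  note f148 = c11_def[symmetric]
  note f149 = flipF[OF f148 p3]
  define c12 where "c12 = c3 #>\<^bsub>G6\<^esub> L (gX,True)"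
  have p12: "Pc c12" unfolding c12_def by (rule Pstep[OF p3])
  note f150 = c12_def[symmetric]
  note f151 = flipT[OF f150 p3]
  define c13 where "c13 = c3 #>\<^bsub>G6\<^esub> L (gZ,False)"
  have p13: "Pc c13" unfolding c13_def by (rule Pstep[OF p3])
  note f152 = c13_def[symmetric]
  note f153 = flipF[OF f152 p3]
  define c14 where "c14 = c3 #>\<^bsub>G6\<^esub> L (gZ,True)"
  have p14: "Pc c14" unfolding c14_def by (rule Pstep[OF p3])
  note f154 = c14_def[symmetric]
  note f155 = flipT[OF f154 p3]
  define c15 where "c15 = c7 #>\<^bsub>G6\<^esub> L (gX,False)"
  have p15: "Pc c15" unfolding c15_def by (rule Pstep[OF p7])
  note f156 = c15_def[symmetric]
  note f157 = flipF[OF f156 p7]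
  define c16 where "c16 = c7 #>\<^bsub>G6\<^esub> L (gX,True)"
  have p16: "Pc c16" unfolding c16_def by (rule Pstep[OF p7])
  note f158 = c16_def[symmetric]
  note f159 = flipT[OF f158 p7]
  define c17 where "c17 = c7 #>\<^bsub>G6\<^esub> L (gY,False)"
  have p17: "Pc c17" unfolding c17_def by (rule Pstep[OF p7])
  note f160 = c17_def[symmetric]
  note f161 = flipF[OF f160 p7]
  note f162 = flipT[OF f161 p17]
  note f163 = pcons[OF f162 pnil[OF p17] p7]
  note f164 = ded[OF rho1 f163 p17 p7]
  note f165 = flipF[OF f164 p17]
  define c18 where "c18 = c7 #>\<^bsub>G6\<^esub> L (gZ,False)"
  have p18: "Pc c18" unfolding c18_def by (rule Pstep[OF p7])
  note f166 = c18_def[symmetric]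
  note f167 = flipF[OF f166 p7]
  note f168 = flipF[OF f125 p9]
  note f169 = flipF[OF f51 p2]
  note f170 = flipF[OF f111 p1]
  note f171 = flipF[OF f51 p2]
  note f172 = flipF[OF f41 p1]
  note f173 = flipF[OF f166 p7]
  note f174 = flipT[OF f167 p18]
  note f175 = pcons[OF f174 pcons[OF f173 pcons[OF f172 pcons[OF f171 pcons[OF f170 pcons[OF f169 pcons[OF f168 pnil[OF p9] p2] p1] p2] p1] p7] p18] p7]
  note f176 = ded[OF rho18 f175 p9 p7]
  note f177 = flipF[OF f176 p9]
  note f178 = HOL.trans[OF HOL.sym[OF f177] f158]
  note f179 = HOL.sym[OF f178]
  note f180 = tr1[OF f159 f179]
  note f181 = flipT[OF f153 p13]
  note f182 = flipF[OF f23 p3]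
  note f183 = flipF[OF f5 p0]
  note f184 = flipF[OF f41 p1]
  note f185 = flipF[OF f166 p7]
  note f186 = pcons[OF f185 pcons[OF f184 pcons[OF f183 pcons[OF f182 pcons[OF f181 pnil[OF p13] p3] p0] p1] p7] p18]
  note f187 = ded[OF rho12 f186 p13 p18]
  note f188 = flipF[OF f187 p13]
  note f189 = tr2[OF f158 f179]
  note f190 = flipT[OF f161 p17]
  note f191 = flipT[OF f189 p7]
  note f192 = flipF[OF f135 p9]
  note f193 = flipF[OF f176 p9]
  note f194 = flipF[OF f156 p7]
  note f195 = pcons[OF f194 pcons[OF f193 pcons[OF f192 pcons[OF f191 pcons[OF f190 pnil[OF p17] p7] p9] p9] p7] p15]
  note f196 = ded[OF rho7 f195 p17 p15]
  note f197 = flipT[OF f196 p17]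
  note f198 = flipT[OF f188 p18]
  note f199 = pcons[OF f198 pnil[OF p18] p13]
  note f200 = ded[OF rho3 f199 p18 p13]
  note f201 = flipF[OF f200 p18]
  note f202 = flipF[OF f116 p8]
  note f203 = flipF[OF f111 p1]
  note f204 = flipF[OF f8 p2]
  note f205 = flipF[OF f5 p0]
  note f206 = flipF[OF f41 p1]
  note f207 = flipF[OF f166 p7]
  note f208 = flipT[OF f188 p18]
  note f209 = pcons[OF f208 pcons[OF f207 pcons[OF f206 pcons[OF f205 pcons[OF f204 pcons[OF f203 pcons[OF f202 pnil[OF p8] p1] p2] p0] p1] p7] p18] p13]
  note f210 = ded[OF rho34 f209 p8 p13]
  note f211 = flipF[OF f210 p8]
  note f212 = flipF[OF f125 p9]
  note f213 = flipF[OF f8 p2]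
  note f214 = flipT[OF f7 p0]
  note f215 = flipT[OF f106 p2]
  note f216 = flipF[OF f41 p1]
  note f217 = flipF[OF f156 p7]
  note f218 = flipF[OF f197 p15]
  note f219 = pcons[OF f218 pcons[OF f217 pcons[OF f216 pcons[OF f215 pcons[OF f214 pcons[OF f213 pcons[OF f212 pnil[OF p9] p2] p0] p2] p1] p7] p15] p17]
  note f220 = ded[OF rho22 f219 p9 p17]
  note f221 = flipT[OF f220 p9]
  note f222 = flipF[OF f197 p15]
  note f223 = flipF[OF f221 p17]
  note f224 = flipF[OF f176 p9]
  note f225 = flipT[OF f165 p7]
  note f226 = flipT[OF f196 p17]
  note f227 = pcons[OF f226 pcons[OF f225 pcons[OF f224 pcons[OF f223 pcons[OF f222 pnil[OF p15] p17] p9] p7] p17] p15]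
  note f228 = ded[OF rho4 f227 p15 p15]
  note f229 = flipT[OF f228 p15]
  note f230 = flipF[OF f221 p17]
  note f231 = flipF[OF f176 p9]
  note f232 = flipF[OF f156 p7]
  note f233 = flipF[OF f197 p15]
  note f234 = flipT[OF f161 p17]
  note f235 = flipT[OF f42 p7]
  note f236 = flipF[OF f99 p1]
  note f237 = pcons[OF f236 pcons[OF f235 pcons[OF f234 pcons[OF f233 pcons[OF f232 pcons[OF f231 pcons[OF f230 pnil[OF p17] p9] p7] p15] p17] p7] p1] p1]
  note f238 = ded[OF rho24 f237 p17 p1]
  note f239 = flipT[OF f238 p17]
  note f240 = HOL.trans[OF HOL.sym[OF f239] f41]
  note f241 = tr1[OF f221 f240]
  note f242 = HOL.trans[OF HOL.sym[OF f241] f156]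
  note f243 = tr1[OF f196 f240]
  note f244 = HOL.trans[OF HOL.sym[OF f243] f189]
  note f245 = tr1[OF f164 f240]
  note f246 = tr2[OF f160 f240]
  note f247 = tr1[OF f161 f240]
  note f248 = tr2[OF f165 f240]
  note f249 = tr1[OF f238 f240]
  note f250 = tr1[OF f197 f244]
  note f251 = tr2[OF f250 f240]
  note f252 = tr1[OF f157 f244]
  note f253 = tr2[OF f220 f240]
  note f254 = tr1[OF f229 f244]
  note f255 = tr2[OF f254 f244]
  note f256 = tr1[OF f228 f244]
  note f257 = tr2[OF f256 f244]
  note f258 = tr2[OF f156 f244]
  define c19 where "c19 = c7 #>\<^bsub>G6\<^esub> L (gW,False)"
  have p19: "Pc c19" unfolding c19_def by (rule Pstep[OF p7])
  note f259 = c19_def[symmetric]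
  note f260 = flipF[OF f259 p7]
  note f261 = flipF[OF f155 p14]
  note f262 = flipF[OF f152 p3]
  note f263 = flipT[OF f201 p13]
  note f264 = flipT[OF f167 p18]
  note f265 = flipF[OF f259 p7]
  note f266 = pcons[OF f265 pcons[OF f264 pcons[OF f263 pcons[OF f262 pcons[OF f261 pnil[OF p14] p3] p13] p18] p7] p19]
  note f267 = ded[OF rho15 f266 p14 p19]
  note f268 = flipT[OF f267 p14]
  note f269 = flipT[OF f260 p19]
  note f270 = pcons[OF f269 pnil[OF p19] p7]
  note f271 = ded[OF rho3 f270 p19 p7]
  note f272 = flipF[OF f271 p19]
  note f273 = flipF[OF f268 p19]
  note f274 = flipF[OF f155 p14]
  note f275 = flipT[OF f20 p3]
  note f276 = flipT[OF f7 p0]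
  note f277 = flipF[OF f136 p2]
  note f278 = pcons[OF f277 pcons[OF f276 pcons[OF f275 pcons[OF f274 pcons[OF f273 pnil[OF p19] p14] p3] p0] p2] p10]
  note f279 = ded[OF rho15 f278 p19 p10]
  note f280 = flipT[OF f279 p19]
  note f281 = flipF[OF f271 p19]
  note f282 = flipF[OF f258 p7]
  note f283 = flipF[OF f125 p9]
  note f284 = flipF[OF f8 p2]
  note f285 = flipF[OF f5 p0]
  note f286 = flipF[OF f41 p1]
  note f287 = flipT[OF f272 p7]
  note f288 = pcons[OF f287 pcons[OF f286 pcons[OF f285 pcons[OF f284 pcons[OF f283 pcons[OF f282 pcons[OF f281 pnil[OF p19] p7] p9] p2] p0] p1] p7] p19]
  note f289 = ded[OF rho34 f288 p19 p19]
  note f290 = flipF[OF f289 p19]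
  note f291 = flipT[OF f260 p19]
  note f292 = flipT[OF f248 p7]
  note f293 = flipF[OF f259 p7]
  note f294 = pcons[OF f293 pcons[OF f292 pcons[OF f291 pnil[OF p19] p7] p7] p19]
  note f295 = ded[OF rho40 f294 p19 p19]
  note f296 = flipT[OF f295 p19]
  note f297 = flipF[OF f280 p10]
  note f298 = flipF[OF f289 p19]
  note f299 = flipF[OF f289 p19]
  note f300 = flipF[OF f289 p19]
  note f301 = flipF[OF f268 p19]
  note f302 = flipF[OF f155 p14]
  note f303 = flipT[OF f154 p3]
  note f304 = pcons[OF f303 pcons[OF f302 pcons[OF f301 pcons[OF f300 pcons[OF f299 pcons[OF f298 pcons[OF f297 pnil[OF p10] p19] p19] p19] p19] p14] p3] p14]
  note f305 = ded[OF rho18 f304 p10 p14]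
  note f306 = flipF[OF f305 p10]
  note f307 = flipF[OF f280 p10]
  note f308 = flipF[OF f268 p19]
  note f309 = flipF[OF f155 p14]
  note f310 = flipT[OF f20 p3]
  note f311 = flipT[OF f2 p0]
  note f312 = flipF[OF f19 p0]
  note f313 = flipF[OF f148 p3]
  note f314 = pcons[OF f313 pcons[OF f312 pcons[OF f311 pcons[OF f310 pcons[OF f309 pcons[OF f308 pcons[OF f307 pnil[OF p10] p19] p14] p3] p0] p0] p3] p11]
  note f315 = ded[OF rho39 f314 p10 p11]
  note f316 = flipT[OF f315 p10]
  note f317 = flipF[OF f316 p11]
  note f318 = flipF[OF f280 p10]
  note f319 = flipT[OF f260 p19]
  note f320 = flipT[OF f42 p7]
  note f321 = flipF[OF f112 p1]
  note f322 = pcons[OF f321 pcons[OF f320 pcons[OF f319 pcons[OF f318 pcons[OF f317 pnil[OF p11] p10] p19] p7] p1] p8]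
  note f323 = ded[OF rho15 f322 p11 p8]
  note f324 = flipT[OF f323 p11]
  define c20 where "c20 = c8 #>\<^bsub>G6\<^esub> L (gX,True)"
  have p20: "Pc c20" unfolding c20_def by (rule Pstep[OF p8])
  note f325 = c20_def[symmetric]
  note f326 = flipT[OF f325 p8]
  define c21 where "c21 = c8 #>\<^bsub>G6\<^esub> L (gZ,True)"
  have p21: "Pc c21" unfolding c21_def by (rule Pstep[OF p8])
  note f327 = c21_def[symmetric]
  note f328 = flipT[OF f327 p8]
  note f329 = flipF[OF f125 p9]
  note f330 = flipF[OF f8 p2]
  note f331 = flipF[OF f5 p0]
  note f332 = flipT[OF f117 p1]
  note f333 = flipT[OF f327 p8]
  note f334 = pcons[OF f333 pcons[OF f332 pcons[OF f331 pcons[OF f330 pcons[OF f329 pnil[OF p9] p2] p0] p1] p8] p21]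
  note f335 = ded[OF rho10 f334 p9 p21]
  note f336 = flipT[OF f335 p9]
  note f337 = flipT[OF f153 p13]
  note f338 = flipT[OF f154 p3]
  note f339 = flipT[OF f267 p14]
  note f340 = flipT[OF f279 p19]
  note f341 = flipT[OF f315 p10]
  note f342 = flipT[OF f323 p11]
  note f343 = flipT[OF f327 p8]
  note f344 = pcons[OF f343 pcons[OF f342 pcons[OF f341 pcons[OF f340 pcons[OF f339 pcons[OF f338 pcons[OF f337 pnil[OF p13] p3] p14] p19] p10] p11] p8] p21]
  note f345 = ded[OF rho2 f344 p13 p21]
  note f346 = flipF[OF f345 p13]
  note f347 = flipF[OF f328 p21]
  note f348 = flipF[OF f324 p8]
  note f349 = flipF[OF f316 p11]
  note f350 = flipT[OF f137 p10]
  note f351 = flipT[OF f124 p2]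
  note f352 = pcons[OF f351 pcons[OF f350 pcons[OF f349 pcons[OF f348 pcons[OF f347 pnil[OF p21] p8] p11] p10] p2] p9]
  note f353 = ded[OF rho10 f352 p21 p9]
  note f354 = flipT[OF f353 p21]
  note f355 = flipF[OF f328 p21]
  note f356 = flipF[OF f324 p8]
  note f357 = flipF[OF f316 p11]
  note f358 = flipF[OF f280 p10]
  note f359 = flipT[OF f260 p19]
  note f360 = flipT[OF f189 p7]
  note f361 = flipF[OF f354 p9]
  note f362 = pcons[OF f361 pcons[OF f360 pcons[OF f359 pcons[OF f358 pcons[OF f357 pcons[OF f356 pcons[OF f355 pnil[OF p21] p8] p11] p10] p19] p7] p9] p21]
  note f363 = ded[OF rho32 f362 p21 p21]
  note f364 = flipT[OF f363 p21]
  note f365 = flipT[OF f353 p21]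
  note f366 = flipT[OF f134 p9]
  note f367 = flipF[OF f354 p9]
  note f368 = pcons[OF f367 pcons[OF f366 pcons[OF f365 pnil[OF p21] p9] p9] p21]
  note f369 = ded[OF rho40 f368 p21 p21]
  note f370 = flipT[OF f369 p21]
  note f371 = flipF[OF f345 p13]
  note f372 = flipF[OF f364 p21]
  note f373 = flipF[OF f364 p21]
  note f374 = flipF[OF f364 p21]
  note f375 = flipF[OF f328 p21]
  note f376 = flipF[OF f324 p8]
  note f377 = flipT[OF f323 p11]
  note f378 = pcons[OF f377 pcons[OF f376 pcons[OF f375 pcons[OF f374 pcons[OF f373 pcons[OF f372 pcons[OF f371 pnil[OF p13] p21] p21] p21] p21] p8] p11] p8]
  note f379 = ded[OF rho18 f378 p13 p8]
  note f380 = flipF[OF f379 p13]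
  note f381 = HOL.trans[OF HOL.sym[OF f380] f325]
  note f382 = HOL.sym[OF f381]
  note f383 = tr1[OF f326 f382]
  note f384 = flipF[OF f345 p13]
  note f385 = flipF[OF f364 p21]
  note f386 = flipF[OF f364 p21]
  note f387 = flipF[OF f364 p21]
  note f388 = flipF[OF f364 p21]
  note f389 = flipT[OF f369 p21]
  note f390 = flipT[OF f346 p21]
  note f391 = pcons[OF f390 pcons[OF f389 pcons[OF f388 pcons[OF f387 pcons[OF f386 pcons[OF f385 pcons[OF f384 pnil[OF p13] p21] p21] p21] p21] p21] p21] p13]
  note f392 = ded[OF rho25 f391 p13 p13]
  note f393 = flipT[OF f392 p13]
  note f394 = flipT[OF f188 p18]
  note f395 = flipT[OF f392 p13]
  note f396 = flipF[OF f187 p13]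
  note f397 = pcons[OF f396 pcons[OF f395 pcons[OF f394 pnil[OF p18] p13] p13] p18]
  note f398 = ded[OF rho40 f397 p18 p18]
  note f399 = flipT[OF f398 p18]
  note f400 = tr2[OF f325 f382]
  define c22 where "c22 = c9 #>\<^bsub>G6\<^esub> L (gZ,True)"
  have p22: "Pc c22" unfolding c22_def by (rule Pstep[OF p9])
  note f401 = c22_def[symmetric]
  note f402 = flipT[OF f401 p9]
  note f403 = flipF[OF f155 p14]
  note f404 = flipF[OF f152 p3]
  note f405 = flipF[OF f345 p13]
  note f406 = flipT[OF f353 p21]
  note f407 = flipT[OF f401 p9]
  note f408 = pcons[OF f407 pcons[OF f406 pcons[OF f405 pcons[OF f404 pcons[OF f403 pnil[OF p14] p3] p13] p21] p9] p22]
  note f409 = ded[OF rho10 f408 p14 p22]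
  note f410 = flipT[OF f409 p14]
  note f411 = flipF[OF f200 p18]
  note f412 = flipF[OF f379 p13]
  note f413 = flipF[OF f324 p8]
  note f414 = flipF[OF f316 p11]
  note f415 = flipF[OF f280 p10]
  note f416 = flipF[OF f268 p19]
  note f417 = flipT[OF f409 p14]
  note f418 = pcons[OF f417 pcons[OF f416 pcons[OF f415 pcons[OF f414 pcons[OF f413 pcons[OF f412 pcons[OF f411 pnil[OF p18] p13] p8] p11] p10] p19] p14] p22]
  note f419 = ded[OF rho34 f418 p18 p22]
  note f420 = flipF[OF f419 p18]
  note f421 = flipF[OF f402 p22]
  note f422 = flipF[OF f125 p9]
  note f423 = flipF[OF f8 p2]
  note f424 = flipT[OF f24 p0]
  note f425 = flipT[OF f154 p3]
  note f426 = pcons[OF f425 pcons[OF f424 pcons[OF f423 pcons[OF f422 pcons[OF f421 pnil[OF p22] p9] p2] p0] p3] p14]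
  note f427 = ded[OF rho10 f426 p22 p14]
  note f428 = flipT[OF f427 p22]
  note f429 = flipF[OF f402 p22]
  note f430 = flipF[OF f176 p9]
  note f431 = flipF[OF f258 p7]
  note f432 = flipF[OF f176 p9]
  note f433 = flipF[OF f258 p7]
  note f434 = flipT[OF f134 p9]
  note f435 = flipT[OF f401 p9]
  note f436 = pcons[OF f435 pcons[OF f434 pcons[OF f433 pcons[OF f432 pcons[OF f431 pcons[OF f430 pcons[OF f429 pnil[OF p22] p9] p7] p9] p7] p9] p9] p22]
  note f437 = ded[OF rho25 f436 p22 p22]
  note f438 = flipT[OF f437 p22]
  note f439 = flipT[OF f409 p14]
  note f440 = flipT[OF f437 p22]
  note f441 = flipF[OF f410 p22]
  note f442 = pcons[OF f441 pcons[OF f440 pcons[OF f439 pnil[OF p14] p22] p22] p14]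
  note f443 = ded[OF rho40 f442 p14 p14]
  note f444 = flipT[OF f443 p14]
  note f445 = flipF[OF f419 p18]
  note f446 = flipT[OF f437 p22]
  note f447 = flipT[OF f420 p22]
  note f448 = flipF[OF f399 p18]
  note f449 = flipF[OF f419 p18]
  note f450 = pcons[OF f449 pcons[OF f448 pcons[OF f447 pcons[OF f446 pcons[OF f445 pnil[OF p18] p22] p22] p18] p18] p22]
  note f451 = ded[OF rho8 f450 p18 p22]
  note f452 = flipT[OF f451 p18]
  note f453 = flipF[OF f305 p10]
  note f454 = flipT[OF f443 p14]
  note f455 = flipT[OF f306 p14]
  note f456 = flipF[OF f147 p10]
  note f457 = flipF[OF f305 p10]
  note f458 = pcons[OF f457 pcons[OF f456 pcons[OF f455 pcons[OF f454 pcons[OF f453 pnil[OF p10] p14] p14] p10] p10] p14]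
  note f459 = ded[OF rho8 f458 p10 p14]
  note f460 = flipT[OF f459 p10]
  note f461 = flipF[OF f316 p11]
  note f462 = flipF[OF f305 p10]
  note f463 = flipF[OF f460 p14]
  note f464 = flipF[OF f305 p10]
  note f465 = flipF[OF f155 p14]
  note f466 = flipF[OF f152 p3]
  note f467 = flipT[OF f153 p13]
  note f468 = pcons[OF f467 pcons[OF f466 pcons[OF f465 pcons[OF f464 pcons[OF f463 pcons[OF f462 pcons[OF f461 pnil[OF p11] p10] p14] p10] p14] p3] p13] p3]
  note f469 = ded[OF rho18 f468 p11 p3]
  note f470 = flipF[OF f469 p11]
  note f471 = HOL.trans[OF HOL.sym[OF f470] f150]
  note f472 = HOL.sym[OF f471]
  note f473 = tr1[OF f151 f472]
  note f474 = flipF[OF f316 p11]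
  note f475 = flipF[OF f305 p10]
  note f476 = flipF[OF f460 p14]
  note f477 = flipF[OF f305 p10]
  note f478 = flipF[OF f460 p14]
  note f479 = flipT[OF f146 p10]
  note f480 = flipT[OF f315 p10]
  note f481 = pcons[OF f480 pcons[OF f479 pcons[OF f478 pcons[OF f477 pcons[OF f476 pcons[OF f475 pcons[OF f474 pnil[OF p11] p10] p14] p10] p14] p10] p10] p11]
  note f482 = ded[OF rho25 f481 p11 p11]
  note f483 = flipT[OF f482 p11]
  note f484 = tr2[OF f150 f472]
  define c23 where "c23 = c11 #>\<^bsub>G6\<^esub> L (gW,False)"
  have p23: "Pc c23" unfolding c23_def by (rule Pstep[OF p11])
  note f485 = c23_def[symmetric]
  note f486 = flipF[OF f485 p11]
  note f487 = flipF[OF f402 p22]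
  note f488 = flipF[OF f125 p9]
  note f489 = flipT[OF f141 p2]
  note f490 = flipT[OF f315 p10]
  note f491 = flipF[OF f485 p11]
  note f492 = pcons[OF f491 pcons[OF f490 pcons[OF f489 pcons[OF f488 pcons[OF f487 pnil[OF p22] p9] p2] p10] p11] p23]
  note f493 = ded[OF rho15 f492 p22 p23]
  note f494 = flipT[OF f493 p22]
  note f495 = flipT[OF f486 p23]
  note f496 = pcons[OF f495 pnil[OF p23] p11]
  note f497 = ded[OF rho3 f496 p23 p11]
  note f498 = flipF[OF f497 p23]
  note f499 = flipT[OF f486 p23]
  note f500 = flipT[OF f323 p11]
  note f501 = flipF[OF f116 p8]
  note f502 = flipF[OF f41 p1]
  note f503 = flipF[OF f166 p7]
  note f504 = pcons[OF f503 pcons[OF f502 pcons[OF f501 pcons[OF f500 pcons[OF f499 pnil[OF p23] p11] p8] p1] p7] p18]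
  note f505 = ded[OF rho13 f504 p23 p18]
  note f506 = flipT[OF f505 p23]
  note f507 = flipF[OF f494 p23]
  note f508 = flipF[OF f452 p22]
  note f509 = flipF[OF f419 p18]
  note f510 = flipF[OF f452 p22]
  note f511 = flipF[OF f506 p18]
  note f512 = flipF[OF f494 p23]
  note f513 = flipT[OF f493 p22]
  note f514 = pcons[OF f513 pcons[OF f512 pcons[OF f511 pcons[OF f510 pcons[OF f509 pcons[OF f508 pcons[OF f507 pnil[OF p23] p22] p18] p22] p18] p23] p22] p23]
  note f515 = ded[OF rho18 f514 p23 p23]
  note f516 = flipF[OF f515 p23]
  note f517 = flipF[OF f494 p23]
  note f518 = flipF[OF f452 p22]
  note f519 = flipF[OF f419 p18]
  note f520 = flipF[OF f452 p22]
  note f521 = flipF[OF f419 p18]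
  note f522 = flipT[OF f437 p22]
  note f523 = flipT[OF f493 p22]
  note f524 = pcons[OF f523 pcons[OF f522 pcons[OF f521 pcons[OF f520 pcons[OF f519 pcons[OF f518 pcons[OF f517 pnil[OF p23] p22] p18] p22] p18] p22] p22] p23]
  note f525 = ded[OF rho25 f524 p23 p23]
  note f526 = flipT[OF f525 p23]
  have cl: "list_all (\<lambda>A. list_all (\<lambda>g. A #>\<^bsub>G6\<^esub> L (g, False) \<in> set [c0,c1,c2,c3,c7,c8,c9,c10,c11,c13,c14,c18,c19,c21,c22,c23]) [gX, gY, gZ, gW]) [c0,c1,c2,c3,c7,c8,c9,c10,c11,c13,c14,c18,c19,c21,c22,c23]"
    by (simp only: list.pred_inject f1 f3 f5 f19 f111 f99 f41 f112 f51 f18 f8 f136 f148 f30 f152 f23 f258 f246 f166 f259 f210 f123 f324 f116 f176 f135 f125 f354 f305 f147 f280 f140 f469 f483 f316 f485 f379 f393 f345 f187 f460 f444 f155 f428 f419 f399 f506 f200 f289 f296 f268 f271 f364 f370 f328 f336 f452 f438 f402 f410 f515 f526 f494 f497) simp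
  have pl: "\<forall>A\<in>set [c0,c1,c2,c3,c7,c8,c9,c10,c11,c13,c14,c18,c19,c21,c22,c23]. Pc A" using p0 p1 p2 p3 p7 p8 p9 p10 p11 p13 p14 p18 p19 p21 p22 p23 by simp
  have o: "\<one>\<^bsub>G6\<^esub> \<in> c0" unfolding c0_def by (rule oneH)
  have "finite (carrier G6) \<and> card (carrier G6) \<le> 16 * length [c0,c1,c2,c3,c7,c8,c9,c10,c11,c13,c14,c18,c19,c21,c22,c23]" by (rule cover[OF pl cl]) (use o in auto)
  then show ?thesis by simp
qed

definition rep :: "nat \<times> nat \<times> nat \<times> nat \<Rightarrow> gen4 word" where
  "rep t = (case t of (a, b, c, d) \<Rightarrow> gpow gX a @ gpow gY b @ gpow gZ c @ gpow gW d)"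

definition Tl :: "(nat \<times> nat \<times> nat \<times> nat) list" where
  "Tl = concat (map (\<lambda>a. concat (map (\<lambda>b. concat (map (\<lambda>c. map (\<lambda>d. (a, b, c, d)) [0..<2]) [0..<8])) [0..<2])) [0..<8])"

lemma Tl_set: "set Tl = {..<8} \<times> {..<2} \<times> {..<8} \<times> {..<2}"
  by (force simp: Tl_def image_iff)

lemma Tl_distinct: "distinct Tl" by code_simp
lemma Tl_length: "length Tl = 256" by code_simp

definition FF :: "nat \<times> nat \<times> nat \<times> nat \<Rightarrow> nat \<times> nat" where
  "FF t = (wa (rep t) 0, wa (rep t) 16)"

lemma FF_distinct: "distinct (map FF Tl)" by code_simp

lemma FF_inj: "inj_on FF (set Tl)"
  using FF_distinct by (simp add: distinct_map)

lemma rep_class_inj: "inj_on (\<lambda>t. pres_class G_rels (rep t)) (set Tl)"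
proof (rule inj_onI)
  fix t s assume t: "t \<in> set Tl" and s: "s \<in> set Tl"
    and e: "pres_class G_rels (rep t) = pres_class G_rels (rep s)"
  have "FF t = FF s" unfolding FF_def using class_wa[OF e] by simp
  then show "t = s" using FF_inj t s by (meson inj_onD)
qed

lemma card_reps: "card ((\<lambda>t. pres_class G_rels (rep t)) ` set Tl) = 256"
  using card_image[OF rep_class_inj] distinct_card[OF Tl_distinct] Tl_length by simp

lemma carrier_reps: "carrier G6 = (\<lambda>t. pres_class G_rels (rep t)) ` set Tl"
proof -
  have "(\<lambda>t. pres_class G_rels (rep t)) ` set Tl \<subseteq> carrier G6" by auto
  moreover have "card (carrier G6) \<le> card ((\<lambda>t. pres_class G_rels (rep t)) ` set Tl)"
    using card_le_256 card_reps by simp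
  ultimately have "(\<lambda>t. pres_class G_rels (rep t)) ` set Tl = carrier G6"
    using card_le_256 by (intro card_seteq) auto
  then show ?thesis by simp
qed

lemma order_G6: "order G6 = 256"
  unfolding order_def carrier_reps using card_reps by simp

lemma class_rep: "\<exists>t\<in>set Tl. pres_class G_rels u = pres_class G_rels (rep t)"
proof -
  have "pres_class G_rels u \<in> carrier G6" by simp
  then show ?thesis unfolding carrier_reps by auto
qed

lemma dec_eq: "wa u 0 = wa v 0 \<Longrightarrow> wa u 16 = wa v 16 \<Longrightarrow> pres_class G_rels u = pres_class G_rels v"
proof -
  assume 0: "wa u 0 = wa v 0" and 16: "wa u 16 = wa v 16"
  obtain t where t: "t \<in> set Tl" "pres_class G_rels u = pres_class G_rels (rep t)" using class_rep by blast
  obtain s where s: "s \<in> set Tl" "pres_class G_rels v = pres_class G_rels (rep s)" using class_rep by blast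
  have "FF t = FF s" unfolding FF_def using class_wa[OF t(2)] class_wa[OF s(2)] 0 16 by simp
  then have "t = s" using FF_inj t s by (meson inj_onD)
  then show ?thesis using t s by simp
qed

lemma dec_neq: "wa u p \<noteq> wa v p \<Longrightarrow> p < 32 \<Longrightarrow> pres_class G_rels u \<noteq> pres_class G_rels v"
  using class_wa by blast

lemma dec_iff: "pres_class G_rels u = pres_class G_rels v \<longleftrightarrow> (wa u 0 = wa v 0 \<and> wa u 16 = wa v 16)"
proof
  assume "pres_class G_rels u = pres_class G_rels v"
  then show "wa u 0 = wa v 0 \<and> wa u 16 = wa v 16" using class_wa[of u v 0] class_wa[of u v 16] by simp
next
  assume "wa u 0 = wa v 0 \<and> wa u 16 = wa v 16"
  then show "pres_class G_rels u = pres_class G_rels v" using dec_eq[of u v] by simp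
qed

lemma dec_neq2: "\<not> (wa u 0 = wa v 0 \<and> wa u 16 = wa v 16) \<Longrightarrow> pres_class G_rels u \<noteq> pres_class G_rels v"
  using dec_iff[of u v] by argo

lemma mem_classes: "\<exists>w'\<in>set ws. wa w 0 = wa w' 0 \<and> wa w 16 = wa w' 16 \<Longrightarrow> pres_class G_rels w \<in> pres_class G_rels ` set ws"
proof -
  assume "\<exists>w'\<in>set ws. wa w 0 = wa w' 0 \<and> wa w 16 = wa w' 16"
  then obtain w' where w': "w' \<in> set ws" "wa w 0 = wa w' 0 \<and> wa w 16 = wa w' 16" by blast
  then have "pres_class G_rels w = pres_class G_rels w'" by (simp only: dec_iff)
  then show ?thesis using w'(1) by (rule image_eqI)
qed

lemma card_classes: "distinct (map (\<lambda>w. (wa w 0, wa w 16)) ws) \<Longrightarrow> card (pres_class G_rels ` set ws) = length ws"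
proof -
  assume d: "distinct (map (\<lambda>w. (wa w 0, wa w 16)) ws)"
  have "inj_on (pres_class G_rels) (set ws)"
  proof (rule inj_onI)
    fix u v assume "u \<in> set ws" "v \<in> set ws" "pres_class G_rels u = pres_class G_rels v"
    then have "(wa u 0, wa u 16) = (wa v 0, wa v 16)" by (simp only: dec_iff prod.inject)
    then show "u = v" using d \<open>u \<in> set ws\<close> \<open>v \<in> set ws\<close> by (simp add: distinct_map inj_on_def)
  qed
  moreover have "distinct ws" using d by (simp add: distinct_map)
  ultimately show ?thesis by (simp add: card_image distinct_card)
qed

lemma (in group) subgroup_pow_closed: "subgroup S G \<Longrightarrow> a \<in> S \<Longrightarrow> a [^] (n::nat) \<in> S"
proof (induction n)
  case 0 then show ?case by (simp add: subgroup.one_closed)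
next
  case (Suc n)
  have "a \<in> carrier G" using Suc.prems subgroup.subset by blast
  then show ?case using Suc by (simp add: subgroup.m_closed)
qed

lemma gpow_class: "pres_gen G_rels g [^]\<^bsub>G6\<^esub> (n::nat) = pres_class G_rels (gpow g n)"
  by (simp add: pres_gen_def G6_pow concat_rep1)

lemma tg_A1:
  assumes rels: "(gpow g1 8, []) \<in> G_rels" "(gpow g2 2, []) \<in> G_rels"
      "(ginv g2 @ [(g1, False)] @ [(g2, False)], gpow g1 3) \<in> G_rels"
  shows "inv\<^bsub>G6\<^esub> pres_gen G_rels g2 \<otimes>\<^bsub>G6\<^esub> pres_gen G_rels g1 \<otimes>\<^bsub>G6\<^esub> pres_gen G_rels g2 = pres_gen G_rels g1 [^]\<^bsub>G6\<^esub> (3::nat)"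
      unfolding gpow_class using rel_class[OF rels(3)] by (simp add: pres_gen_def G6_inv G6_mult)
lemma tg_A2:   assumes rels: "(gpow g1 8, []) \<in> G_rels" "(gpow g2 2, []) \<in> G_rels"
      "(ginv g2 @ [(g1, False)] @ [(g2, False)], gpow g1 3) \<in> G_rels"
  shows "generate G6 {pres_gen G_rels g1, pres_gen G_rels g2} \<subseteq>
     (\<lambda>(i, j). pres_gen G_rels g1 [^]\<^bsub>G6\<^esub> i \<otimes>\<^bsub>G6\<^esub> pres_gen G_rels g2 [^]\<^bsub>G6\<^esub> j) ` ({..<8::nat} \<times> {..<2::nat})"
  proof (rule G6.sd_gen)
    show "pres_gen G_rels g1 [^]\<^bsub>G6\<^esub> (8::nat) = \<one>\<^bsub>G6\<^esub>"
      unfolding gpow_class G6_one by (rule rel_class[OF rels(1)])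
    show "pres_gen G_rels g2 [^]\<^bsub>G6\<^esub> (2::nat) = \<one>\<^bsub>G6\<^esub>"
      unfolding gpow_class G6_one by (rule rel_class[OF rels(2)])
    show "inv\<^bsub>G6\<^esub> pres_gen G_rels g2 \<otimes>\<^bsub>G6\<^esub> pres_gen G_rels g1 \<otimes>\<^bsub>G6\<^esub> pres_gen G_rels g2 = pres_gen G_rels g1 [^]\<^bsub>G6\<^esub> (3::nat)" by (rule tg_A1[OF rels])
  qed (auto simp: pres_gen_def)
lemma tg_A3: 
  assumes rels: "(gpow g1 8, []) \<in> G_rels" "(gpow g2 2, []) \<in> G_rels"
      "(ginv g2 @ [(g1, False)] @ [(g2, False)], gpow g1 3) \<in> G_rels"
  shows "generate G6 {pres_gen G_rels g1, pres_gen G_rels g2}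
     \<subseteq> (\<lambda>(i, j). pres_class G_rels (gpow g1 i @ gpow g2 j)) ` ({..<8::nat} \<times> {..<2::nat})"
proof -
  have e: "pres_gen G_rels g1 [^]\<^bsub>G6\<^esub> i \<otimes>\<^bsub>G6\<^esub> pres_gen G_rels g2 [^]\<^bsub>G6\<^esub> j
      = pres_class G_rels (gpow g1 i @ gpow g2 j)" for i j :: nat
    by (simp add: gpow_class G6_mult)
  have "(\<lambda>(i, j). pres_gen G_rels g1 [^]\<^bsub>G6\<^esub> i \<otimes>\<^bsub>G6\<^esub> pres_gen G_rels g2 [^]\<^bsub>G6\<^esub> j)
     = (\<lambda>(i, j). pres_class G_rels (gpow g1 i @ gpow g2 j))"
    using e by (auto simp: fun_eq_iff)
  then show ?thesis using tg_A2[OF rels] by simp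
qed
lemma two_gen_eq:
  assumes rels: "(gpow g1 8, []) \<in> G_rels" "(gpow g2 2, []) \<in> G_rels"
      "(ginv g2 @ [(g1, False)] @ [(g2, False)], gpow g1 3) \<in> G_rels"
  shows "generate G6 {pres_gen G_rels g1, pres_gen G_rels g2}
     = (\<lambda>(i, j). pres_class G_rels (gpow g1 i @ gpow g2 j)) ` ({..<8::nat} \<times> {..<2::nat})"
proof
  show "generate G6 {pres_gen G_rels g1, pres_gen G_rels g2}
     \<subseteq> (\<lambda>(i, j). pres_class G_rels (gpow g1 i @ gpow g2 j)) ` ({..<8::nat} \<times> {..<2::nat})"
    by (rule tg_A3[OF rels])
next
  have sg: "subgroup (generate G6 {pres_gen G_rels g1, pres_gen G_rels g2}) G6"
    by (rule G6.generate_is_subgroup) (simp add: pres_gen_def)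
  have i1: "pres_gen G_rels g1 \<in> generate G6 {pres_gen G_rels g1, pres_gen G_rels g2}"
    by (rule generate.incl) simp
  have i2: "pres_gen G_rels g2 \<in> generate G6 {pres_gen G_rels g1, pres_gen G_rels g2}"
    by (rule generate.incl) simp
  show "(\<lambda>(i, j). pres_class G_rels (gpow g1 i @ gpow g2 j)) ` ({..<8::nat} \<times> {..<2::nat})
     \<subseteq> generate G6 {pres_gen G_rels g1, pres_gen G_rels g2}"
  proof
    fix h assume "h \<in> (\<lambda>(i, j). pres_class G_rels (gpow g1 i @ gpow g2 j)) ` ({..<8::nat} \<times> {..<2::nat})"
    then obtain i j :: nat where h: "h = pres_class G_rels (gpow g1 i @ gpow g2 j)" by auto
    have "h = pres_gen G_rels g1 [^]\<^bsub>G6\<^esub> i \<otimes>\<^bsub>G6\<^esub> pres_gen G_rels g2 [^]\<^bsub>G6\<^esub> j"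
      using h by (simp add: gpow_class G6_mult)
    then show "h \<in> generate G6 {pres_gen G_rels g1, pres_gen G_rels g2}"
      by (simp only:) (rule subgroup.m_closed[OF sg G6.subgroup_pow_closed[OF sg i1] G6.subgroup_pow_closed[OF sg i2]])
  qed
qed

definition KK :: "gen4 word set set" where
  "KK = generate G6 {pres_gen G_rels gZ, pres_gen G_rels gW}"

lemma HH_eq: "HH = (\<lambda>(i, j). pres_class G_rels (rep (i, j, 0, 0))) ` ({..<8::nat} \<times> {..<2::nat})"
  unfolding HH_def by (subst two_gen_eq) (auto simp: G_rels_def rep_def)

lemma KK_eq: "KK = (\<lambda>(i, j). pres_class G_rels (rep (0, 0, i, j))) ` ({..<8::nat} \<times> {..<2::nat})"
  unfolding KK_def by (subst two_gen_eq) (auto simp: G_rels_def rep_def)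

lemma KK_sub: "subgroup KK G6"
  unfolding KK_def by (rule G6.generate_is_subgroup) (simp add: pres_gen_def)

lemma HK_eq: "HH <#>\<^bsub>G6\<^esub> KK = carrier G6"
proof
  show "HH <#>\<^bsub>G6\<^esub> KK \<subseteq> carrier G6"
    using subgroup.subset[OF HH_sub] subgroup.subset[OF KK_sub]
    by (auto simp: set_mult_def)
next
  show "carrier G6 \<subseteq> HH <#>\<^bsub>G6\<^esub> KK"
  proof
    fix g assume "g \<in> carrier G6"
    then obtain a b c d where t: "(a, b, c, d) \<in> set Tl" and g: "g = pres_class G_rels (rep (a, b, c, d))"
      unfolding carrier_reps by auto
    have "g = pres_class G_rels (rep (a, b, 0, 0)) \<otimes>\<^bsub>G6\<^esub> pres_class G_rels (rep (0, 0, c, d))"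
      using g by (simp add: G6_mult rep_def)
    moreover have "pres_class G_rels (rep (a, b, 0, 0)) \<in> HH" unfolding HH_eq
      by (rule image_eqI[where x="(a, b)"]) (use t in \<open>simp_all add: Tl_set\<close>)
    moreover have "pres_class G_rels (rep (0, 0, c, d)) \<in> KK" unfolding KK_eq
      by (rule image_eqI[where x="(c, d)"]) (use t in \<open>simp_all add: Tl_set\<close>)
    ultimately show "g \<in> HH <#>\<^bsub>G6\<^esub> KK" by (auto simp: set_mult_def)
  qed
qed

lemma HK_int: "HH \<inter> KK = {\<one>\<^bsub>G6\<^esub>}"
proof
  show "{\<one>\<^bsub>G6\<^esub>} \<subseteq> HH \<inter> KK"
    using subgroup.one_closed[OF HH_sub] subgroup.one_closed[OF KK_sub] by auto
next
  show "HH \<inter> KK \<subseteq> {\<one>\<^bsub>G6\<^esub>}"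
  proof
    fix h assume h: "h \<in> HH \<inter> KK"
    then obtain i j :: nat where ij: "i < 8" "j < 2" "h = pres_class G_rels (rep (i, j, 0, 0))"
      unfolding HH_eq by auto
    from h obtain k l :: nat where kl: "k < 8" "l < 2" "h = pres_class G_rels (rep (0, 0, k, l))"
      unfolding KK_eq by auto
    have m1: "(i, j, 0, 0) \<in> set Tl" using ij unfolding Tl_set by simp
    have m2: "(0, 0, k, l) \<in> set Tl" using kl unfolding Tl_set by simp
    have "(i, j, 0, 0) = (0, 0, k, l)"
      using inj_onD[OF rep_class_inj _ m1 m2] ij kl by simp
    then show "h \<in> {\<one>\<^bsub>G6\<^esub>}" using ij by (simp add: rep_def G6_one)
  qed
qed

lemma dvd8: "(d::nat) dvd 8 \<Longrightarrow> \<not> d dvd 4 \<Longrightarrow> d = 8"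
proof -
  assume a: "d dvd 8" "\<not> d dvd 4"
  have "d \<noteq> 0" using a(1) by (rule_tac notI) simp
  then have "d \<le> 8" "0 < d" using a(1) by (auto intro: dvd_imp_le)
  then have "d \<in> {1, 2, 3, 4, 5, 6, 7, 8}" by auto
  then show ?thesis using a by auto
qed

lemma dvd2: "(d::nat) dvd 2 \<Longrightarrow> \<not> d dvd 1 \<Longrightarrow> d = 2"
proof -
  assume a: "d dvd 2" "\<not> d dvd 1"
  have "d \<noteq> 0" using a(1) by (rule_tac notI) simp
  then have "d \<le> 2" "0 < d" using a(1) by (auto intro: dvd_imp_le)
  then have "d \<in> {1, 2}" by auto
  then show ?thesis using a by auto
qed

lemma ord8: "a \<in> carrier G6 \<Longrightarrow> a [^]\<^bsub>G6\<^esub> (8::nat) = \<one>\<^bsub>G6\<^esub> \<Longrightarrow> a [^]\<^bsub>G6\<^esub> (4::nat) \<noteq> \<one>\<^bsub>G6\<^esub>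
   \<Longrightarrow> group.ord G6 a = 8"
  using G6.pow_eq_id[of a 8] G6.pow_eq_id[of a 4] dvd8 by blast

lemma ord2: "a \<in> carrier G6 \<Longrightarrow> a [^]\<^bsub>G6\<^esub> (2::nat) = \<one>\<^bsub>G6\<^esub> \<Longrightarrow> a [^]\<^bsub>G6\<^esub> (1::nat) \<noteq> \<one>\<^bsub>G6\<^esub>
   \<Longrightarrow> group.ord G6 a = 2"
  using G6.pow_eq_id[of a 2] G6.pow_eq_id[of a 1] dvd2 by blast

lemma ord_x: "group.ord G6 (pres_gen G_rels gX) = 8"
  apply (rule ord8)
  apply (simp add: pres_gen_def)
  unfolding gpow_class G6_one
  apply (rule dec_eq; code_simp)
  apply (rule dec_neq2; code_simp)
  done
lemma ord_z: "group.ord G6 (pres_gen G_rels gZ) = 8"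
  apply (rule ord8)
  apply (simp add: pres_gen_def)
  unfolding gpow_class G6_one
  apply (rule dec_eq; code_simp)
  apply (rule dec_neq2; code_simp)
  done
lemma ord_y: "group.ord G6 (pres_gen G_rels gY) = 2"
  apply (rule ord2)
  apply (simp add: pres_gen_def)
  unfolding gpow_class G6_one
  apply (rule dec_eq; code_simp)
  apply (rule dec_neq2; code_simp)
  done
lemma ord_w: "group.ord G6 (pres_gen G_rels gW) = 2"
  apply (rule ord2)
  apply (simp add: pres_gen_def)
  unfolding gpow_class G6_one
  apply (rule dec_eq; code_simp)
  apply (rule dec_neq2; code_simp)
  done

lemma comm_eq: "inv\<^bsub>G6\<^esub> pres_gen G_rels gX \<otimes>\<^bsub>G6\<^esub> inv\<^bsub>G6\<^esub> pres_gen G_rels gZ \<otimes>\<^bsub>G6\<^esub> pres_gen G_rels gX \<otimes>\<^bsub>G6\<^esub> pres_gen G_rels gZ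
   = pres_gen G_rels gX [^]\<^bsub>G6\<^esub> (2::nat) \<otimes>\<^bsub>G6\<^esub> pres_gen G_rels gZ [^]\<^bsub>G6\<^esub> (2::nat)"
  unfolding gpow_class apply (simp add: pres_gen_def G6_inv G6_mult)
  apply (rule dec_eq; code_simp)
  done

lemma comm_ne: "inv\<^bsub>G6\<^esub> pres_gen G_rels gX \<otimes>\<^bsub>G6\<^esub> inv\<^bsub>G6\<^esub> pres_gen G_rels gZ \<otimes>\<^bsub>G6\<^esub> pres_gen G_rels gX \<otimes>\<^bsub>G6\<^esub> pres_gen G_rels gZ
   \<noteq> \<one>\<^bsub>G6\<^esub>"
  unfolding G6_one apply (simp add: pres_gen_def G6_inv G6_mult)
  apply (rule dec_neq2; code_simp)
  done


lemma cyc_eq: "a \<in> carrier G6 \<Longrightarrow> a [^]\<^bsub>G6\<^esub> (n::nat) = \<one>\<^bsub>G6\<^esub> \<Longrightarrow> 0 < n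
  \<Longrightarrow> generate G6 {a} = (\<lambda>i. a [^]\<^bsub>G6\<^esub> i) ` {..<n}"
proof -
  assume a: "a \<in> carrier G6" and n: "a [^]\<^bsub>G6\<^esub> n = \<one>\<^bsub>G6\<^esub>" and n0: "0 < n"
  have sg: "subgroup (generate G6 {a}) G6" by (rule G6.generate_is_subgroup) (use a in simp)
  have i: "a \<in> generate G6 {a}" by (rule generate.incl) simp
  show ?thesis
    using G6.cyc_gen[OF a n n0] G6.subgroup_pow_closed[OF sg i] by blast
qed

lemma img_upt: "(\<lambda>i. f i) ` {..<n} = f ` set [0..<n]"
  by (simp add: lessThan_atLeast0)

lemma conj_closed:
  assumes S: "S \<subseteq> carrier G6"
    and cl: "\<And>l s. s \<in> S \<Longrightarrow> L l \<otimes>\<^bsub>G6\<^esub> s \<otimes>\<^bsub>G6\<^esub> inv\<^bsub>G6\<^esub> (L l) \<in> S"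
  shows "s \<in> S \<Longrightarrow> pres_class G_rels u \<otimes>\<^bsub>G6\<^esub> s \<otimes>\<^bsub>G6\<^esub> inv\<^bsub>G6\<^esub> (pres_class G_rels u) \<in> S"
proof (induction u arbitrary: s)
  case Nil
  then have "s \<in> carrier G6" using S by auto
  then show ?case using Nil by (simp add: G6_one[symmetric])
next
  case (Cons l u)
  have sc: "s \<in> carrier G6" using Cons.prems S by auto
  have e: "pres_class G_rels (l # u) = L l \<otimes>\<^bsub>G6\<^esub> pres_class G_rels u" by (simp add: L_def G6_mult)
  have "pres_class G_rels (l # u) \<otimes>\<^bsub>G6\<^esub> s \<otimes>\<^bsub>G6\<^esub> inv\<^bsub>G6\<^esub> (pres_class G_rels (l # u))
    = L l \<otimes>\<^bsub>G6\<^esub> (pres_class G_rels u \<otimes>\<^bsub>G6\<^esub> s \<otimes>\<^bsub>G6\<^esub> inv\<^bsub>G6\<^esub> (pres_class G_rels u)) \<otimes>\<^bsub>G6\<^esub> inv\<^bsub>G6\<^esub> (L l)"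
    unfolding e using sc by (simp add: G6.inv_mult_group G6.m_assoc)
  then show ?case using cl[OF Cons.IH[OF Cons.prems]] by simp
qed

definition cw :: "gen4 \<Rightarrow> gen4 word \<Rightarrow> gen4 word" where
  "cw c w = [(c, True)] @ w @ [(c, False)]"

lemma core_lemma:
  fixes g c :: gen4
  defines "ws1 \<equiv> map (gpow g) [0..<8]" and "ws2 \<equiv> map (\<lambda>i. gpow g (2 * i)) [0..<4]"
  assumes r8: "(gpow g 8, []) \<in> G_rels"
    and h1: "list_all (\<lambda>l. list_all (\<lambda>w. \<exists>w'\<in>set ws2. wa ([l] @ w @ invw [l]) 0 = wa w' 0 \<and> wa ([l] @ w @ invw [l]) 16 = wa w' 16) ws2) letters4"
    and h2: "list_all (\<lambda>w. list_all (\<lambda>w'. (wa w 0 = wa (cw c w') 0 \<and> wa w 16 = wa (cw c w') 16)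
               \<longrightarrow> (\<exists>w''\<in>set ws2. wa w 0 = wa w'' 0 \<and> wa w 16 = wa w'' 16)) ws1) ws1"
    and h3: "distinct (map (\<lambda>w. (wa w 0, wa w 16)) ws2)"
  shows "core G6 (generate G6 {pres_gen G_rels g}) = generate G6 {pres_gen G_rels g [^]\<^bsub>G6\<^esub> (2::nat)}
    \<and> card (core G6 (generate G6 {pres_gen G_rels g})) = 4"
proof -
  let ?a = "pres_gen G_rels g"
  have a: "?a \<in> carrier G6" by (simp add: pres_gen_def)
  have a8: "?a [^]\<^bsub>G6\<^esub> (8::nat) = \<one>\<^bsub>G6\<^esub>" unfolding gpow_class G6_one by (rule rel_class[OF r8])
  have "generate G6 {?a} = (\<lambda>i::nat. ?a [^]\<^bsub>G6\<^esub> i) ` {..<8::nat}" by (rule cyc_eq[OF a a8]) simp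
  then have X1: "generate G6 {?a} = pres_class G_rels ` set ws1"
    unfolding ws1_def by (simp add: gpow_class image_image lessThan_atLeast0)
  have a2: "?a [^]\<^bsub>G6\<^esub> (2::nat) \<in> carrier G6" using a by simp
  have a24: "(?a [^]\<^bsub>G6\<^esub> (2::nat)) [^]\<^bsub>G6\<^esub> (4::nat) = \<one>\<^bsub>G6\<^esub>" using a a8 by (simp add: G6.nat_pow_pow)
  have "generate G6 {?a [^]\<^bsub>G6\<^esub> (2::nat)} = (\<lambda>i::nat. (?a [^]\<^bsub>G6\<^esub> (2::nat)) [^]\<^bsub>G6\<^esub> i) ` {..<4::nat}"
    by (rule cyc_eq[OF a2 a24]) simp
  have X2: "generate G6 {?a [^]\<^bsub>G6\<^esub> (2::nat)} = pres_class G_rels ` set ws2"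
  proof -
    have pw: "(?a [^]\<^bsub>G6\<^esub> (2::nat)) [^]\<^bsub>G6\<^esub> i = pres_class G_rels (gpow g (2 * i))" for i :: nat
      by (subst G6.nat_pow_pow[OF a]) (rule gpow_class)
    show ?thesis unfolding ws2_def \<open>generate G6 {?a [^]\<^bsub>G6\<^esub> (2::nat)} = _\<close> pw
      by (simp add: image_image lessThan_atLeast0)
  qed
  have X2c: "pres_class G_rels ` set ws2 \<subseteq> carrier G6" by auto
  have X21: "pres_class G_rels ` set ws2 \<subseteq> pres_class G_rels ` set ws1"
    unfolding ws1_def ws2_def by auto
  have letter: "L l \<otimes>\<^bsub>G6\<^esub> s \<otimes>\<^bsub>G6\<^esub> inv\<^bsub>G6\<^esub> (L l) \<in> pres_class G_rels ` set ws2"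
    if s: "s \<in> pres_class G_rels ` set ws2" for l s
  proof -
    obtain gg b where l: "l = (gg, b)" by (cases l)
    from s obtain w where w: "w \<in> set ws2" "s = pres_class G_rels w" by auto
    have "L l \<otimes>\<^bsub>G6\<^esub> s \<otimes>\<^bsub>G6\<^esub> inv\<^bsub>G6\<^esub> (L l) = pres_class G_rels ([l] @ w @ invw [l])"
      using w by (simp add: L_def G6_inv G6_mult)
    moreover have "\<exists>w'\<in>set ws2. wa ([l] @ w @ invw [l]) 0 = wa w' 0 \<and> wa ([l] @ w @ invw [l]) 16 = wa w' 16"
      using h1 w(1) in_letters4[of gg b] l by (auto simp: list_all_iff)
    ultimately show ?thesis using mem_classes by simp
  qed
  have norm: "g' \<otimes>\<^bsub>G6\<^esub> s \<otimes>\<^bsub>G6\<^esub> inv\<^bsub>G6\<^esub> g' \<in> pres_class G_rels ` set ws2"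
    if gc: "g' \<in> carrier G6" and sc: "s \<in> pres_class G_rels ` set ws2" for g' s
  proof -
    obtain u where "g' = pres_class G_rels u" using gc by (auto simp: G6_carrier)
    then show ?thesis using conj_closed[OF X2c letter sc] by simp
  qed
  have sup: "pres_class G_rels ` set ws2 \<subseteq> core G6 (generate G6 {?a})"
  proof
    fix s assume s: "s \<in> pres_class G_rels ` set ws2"
    have sc: "s \<in> carrier G6" using s X2c by auto
    have "s \<in> {inv\<^bsub>G6\<^esub> g' \<otimes>\<^bsub>G6\<^esub> h \<otimes>\<^bsub>G6\<^esub> g' |h. h \<in> generate G6 {?a}}" if g': "g' \<in> carrier G6" for g'
    proof -
      have "g' \<otimes>\<^bsub>G6\<^esub> s \<otimes>\<^bsub>G6\<^esub> inv\<^bsub>G6\<^esub> g' \<in> generate G6 {?a}"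
        using norm[OF g' s] X21 X1 by auto
      moreover have "inv\<^bsub>G6\<^esub> g' \<otimes>\<^bsub>G6\<^esub> (g' \<otimes>\<^bsub>G6\<^esub> s \<otimes>\<^bsub>G6\<^esub> inv\<^bsub>G6\<^esub> g') \<otimes>\<^bsub>G6\<^esub> g' = s"
        using g' sc by (simp add: G6.m_assoc) (simp add: G6.m_assoc[symmetric])
      ultimately show ?thesis by (metis (mono_tags, lifting) mem_Collect_eq)
    qed
    then show "s \<in> core G6 (generate G6 {?a})" unfolding core_def using sc by blast
  qed
  have sub: "core G6 (generate G6 {?a}) \<subseteq> pres_class G_rels ` set ws2"
  proof
    fix t assume t: "t \<in> core G6 (generate G6 {?a})"
    then have tc: "t \<in> carrier G6" by (simp add: core_def)
    have "t \<in> {inv\<^bsub>G6\<^esub> \<one>\<^bsub>G6\<^esub> \<otimes>\<^bsub>G6\<^esub> h \<otimes>\<^bsub>G6\<^esub> \<one>\<^bsub>G6\<^esub> |h. h \<in> generate G6 {?a}}"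
      using t unfolding core_def by blast
    then obtain h where h: "h \<in> pres_class G_rels ` set ws1" "t = inv\<^bsub>G6\<^esub> \<one>\<^bsub>G6\<^esub> \<otimes>\<^bsub>G6\<^esub> h \<otimes>\<^bsub>G6\<^esub> \<one>\<^bsub>G6\<^esub>"
      unfolding X1 by blast
    then obtain w where w: "w \<in> set ws1" "t = pres_class G_rels w" by auto
    have cc: "pres_class G_rels [(c, False)] \<in> carrier G6" by simp
    have "t \<in> {inv\<^bsub>G6\<^esub> pres_class G_rels [(c, False)] \<otimes>\<^bsub>G6\<^esub> h \<otimes>\<^bsub>G6\<^esub> pres_class G_rels [(c, False)] |h. h \<in> generate G6 {?a}}"
      using t cc unfolding core_def by blast
    then obtain h' where h': "h' \<in> pres_class G_rels ` set ws1"
      "t = inv\<^bsub>G6\<^esub> pres_class G_rels [(c, False)] \<otimes>\<^bsub>G6\<^esub> h' \<otimes>\<^bsub>G6\<^esub> pres_class G_rels [(c, False)]"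
      unfolding X1 by blast
    then obtain w' where w': "w' \<in> set ws1" "t = pres_class G_rels (cw c w')"
      by (auto simp: G6_inv G6_mult cw_def)
    have "pres_class G_rels w = pres_class G_rels (cw c w')" using w w' by simp
    then have "wa w 0 = wa (cw c w') 0 \<and> wa w 16 = wa (cw c w') 16" by (simp only: dec_iff)
    then have "\<exists>w''\<in>set ws2. wa w 0 = wa w'' 0 \<and> wa w 16 = wa w'' 16"
      using h2 w(1) w'(1) by (auto simp: list_all_iff)
    then show "t \<in> pres_class G_rels ` set ws2" using mem_classes w(2) by simp
  qed
  have eq: "core G6 (generate G6 {?a}) = pres_class G_rels ` set ws2" using sup sub by blast
  have "length ws2 = 4" unfolding ws2_def by simp
  then show ?thesis using eq X2 card_classes[OF h3] by simp
qed

lemma core_x: "core G6 (generate G6 {pres_gen G_rels gX}) = generate G6 {pres_gen G_rels gX [^]\<^bsub>G6\<^esub> (2::nat)}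
    \<and> card (core G6 (generate G6 {pres_gen G_rels gX})) = 4"
  apply (rule core_lemma[where c=gZ])
     apply (simp add: G_rels_def)
    apply (unfold letters4_def cw_def; code_simp)
   apply (unfold cw_def; code_simp)
  apply code_simp
  done

lemma core_z: "core G6 (generate G6 {pres_gen G_rels gZ}) = generate G6 {pres_gen G_rels gZ [^]\<^bsub>G6\<^esub> (2::nat)}
    \<and> card (core G6 (generate G6 {pres_gen G_rels gZ})) = 4"
  apply (rule core_lemma[where c=gX])
     apply (simp add: G_rels_def)
    apply (unfold letters4_def cw_def; code_simp)
   apply (unfold cw_def; code_simp)
  apply code_simp
  done

definition mapw :: "(gen2 \<Rightarrow> gen4) \<Rightarrow> gen2 word \<Rightarrow> gen4 word" where
  "mapw f u = map (\<lambda>(g, b). (f g, b)) u"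

lemma mapw_append [simp]: "mapw f (u @ v) = mapw f u @ mapw f v" by (simp add: mapw_def)
lemma mapw_Cons [simp]: "mapw f ((g, b) # u) = (f g, b) # mapw f u" by (simp add: mapw_def)
lemma mapw_Nil [simp]: "mapw f [] = []" by (simp add: mapw_def)
lemma mapw_rep [simp]: "mapw f (replicate n (g, b)) = replicate n (f g, b)" by (simp add: mapw_def)

lemma pres_eq_mapw:
  assumes R: "\<And>u v. (u, v) \<in> SD16_rels \<Longrightarrow> (mapw f u, mapw f v) \<in> G_rels"
  shows "pres_eq SD16_rels u v \<Longrightarrow> pres_eq G_rels (mapw f u) (mapw f v)"
proof (induction rule: pres_eq.induct)
  case (refl u) then show ?case by (rule pres_eq.refl)
next
  case (sym u v) show ?case by (rule pres_eq.sym[OF sym.IH])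
next
  case (trans u v w) show ?case by (rule pres_eq.trans[OF trans.IH])
next
  case (cancel a g b c)
  show ?case using pres_eq.cancel[of G_rels "mapw f a" "f g" b "mapw f c"] by simp
next
  case (rel u v a c)
  show ?case using pres_eq.rel[OF R[OF rel], of "mapw f a" "mapw f c"] by simp
qed

definition psi :: "(gen2 \<Rightarrow> gen4) \<Rightarrow> gen2 word set \<Rightarrow> gen4 word set" where
  "psi f A = pres_class G_rels (mapw f (SOME u. u \<in> A))"

lemma psi_class:
  assumes R: "\<And>u v. (u, v) \<in> SD16_rels \<Longrightarrow> (mapw f u, mapw f v) \<in> G_rels"
  shows "psi f (pres_class SD16_rels u) = pres_class G_rels (mapw f u)"
proof -
  have "pres_eq SD16_rels u (SOME a. a \<in> pres_class SD16_rels u)" by (rule some_class)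
  then have "pres_eq G_rels (mapw f u) (mapw f (SOME a. a \<in> pres_class SD16_rels u))"
    using pres_eq_mapw[OF R] by blast
  then show ?thesis unfolding psi_def pres_class_eq by (rule pres_eq.sym)
qed

lemma SD16_group: "group SD16" unfolding SD16_def by (rule pg_group)

lemma SD16_card: "finite (carrier SD16) \<and> card (carrier SD16) \<le> 16"
proof -
  interpret S: group SD16 by (rule SD16_group)
  let ?a = "pres_gen SD16_rels gA" and ?b = "pres_gen SD16_rels gB"
  have ab: "?a \<in> carrier SD16" "?b \<in> carrier SD16" by (simp_all add: SD16_def pres_gen_def)
  have cl: "pres_class SD16_rels u \<in> generate SD16 {?a, ?b}" for u
  proof (induction u)
    case Nil then show ?case using generate.one[of SD16] by (simp add: SD16_def pg_one)
  next
    case (Cons l u)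
    obtain g b where l: "l = (g, b)" by (cases l)
    have lg: "pres_class SD16_rels [l] \<in> generate SD16 {?a, ?b}"
    proof (cases b)
      case False
      have "pres_class SD16_rels [l] \<in> {?a, ?b}" using l False by (cases g) (simp_all add: pres_gen_def)
      then show ?thesis by (rule generate.incl)
    next
      case True
      have "inv\<^bsub>SD16\<^esub> (pres_gen SD16_rels g) = pres_class SD16_rels [l]"
        using l True by (simp add: SD16_def pg_inv pres_gen_def)
      moreover have "pres_gen SD16_rels g \<in> {?a, ?b}" by (cases g) simp_all
      ultimately show ?thesis using generate.inv[of "pres_gen SD16_rels g" "{?a, ?b}" SD16] by simp
    qed
    have "pres_class SD16_rels (l # u) = pres_class SD16_rels [l] \<otimes>\<^bsub>SD16\<^esub> pres_class SD16_rels u"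
      by (simp add: SD16_def pg_mult)
    then show ?case using generate.eng[OF lg Cons.IH] by simp
  qed
  have relc: "pres_class SD16_rels u = pres_class SD16_rels v" if "(u, v) \<in> SD16_rels" for u v
    unfolding pres_class_eq using pres_eq.rel[OF that, of "[]" "[]"] by simp
  have pw: "pres_gen SD16_rels g [^]\<^bsub>SD16\<^esub> (n::nat) = pres_class SD16_rels (gpow g n)" for g n
    by (simp add: SD16_def pres_gen_def pg_pow concat_rep1)
  have "generate SD16 {?a, ?b} \<subseteq> (\<lambda>(i, j). ?a [^]\<^bsub>SD16\<^esub> i \<otimes>\<^bsub>SD16\<^esub> ?b [^]\<^bsub>SD16\<^esub> j) ` ({..<8::nat} \<times> {..<2::nat})"
  proof (rule S.sd_gen[OF ab])
    have "pres_class SD16_rels (gpow gA 8) = pres_class SD16_rels []" by (rule relc) (simp add: SD16_rels_def)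
    then show "?a [^]\<^bsub>SD16\<^esub> (8::nat) = \<one>\<^bsub>SD16\<^esub>"
      unfolding pw unfolding SD16_def pg_one .
    have "pres_class SD16_rels (gpow gB 2) = pres_class SD16_rels []" by (rule relc) (simp add: SD16_rels_def)
    then show "?b [^]\<^bsub>SD16\<^esub> (2::nat) = \<one>\<^bsub>SD16\<^esub>"
      unfolding pw unfolding SD16_def pg_one .
    have "pres_class SD16_rels (ginv gB @ [(gA, False)] @ [(gB, False)]) = pres_class SD16_rels (gpow gA 3)"
      by (rule relc) (simp add: SD16_rels_def)
    then show "inv\<^bsub>SD16\<^esub> ?b \<otimes>\<^bsub>SD16\<^esub> ?a \<otimes>\<^bsub>SD16\<^esub> ?b = ?a [^]\<^bsub>SD16\<^esub> (3::nat)"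
      unfolding pw by (simp add: SD16_def pres_gen_def pg_inv pg_mult)
  qed
  then have sub: "carrier SD16 \<subseteq> (\<lambda>(i, j). ?a [^]\<^bsub>SD16\<^esub> i \<otimes>\<^bsub>SD16\<^esub> ?b [^]\<^bsub>SD16\<^esub> j) ` ({..<8::nat} \<times> {..<2::nat})"
    using cl by (auto simp: SD16_def pg_carrier)
  have "card ((\<lambda>(i, j). ?a [^]\<^bsub>SD16\<^esub> i \<otimes>\<^bsub>SD16\<^esub> ?b [^]\<^bsub>SD16\<^esub> j) ` ({..<8::nat} \<times> {..<2::nat})) \<le> 16"
    using card_image_le[of "{..<8::nat} \<times> {..<2::nat}"] by fastforce
  then show ?thesis using sub
    by (meson card_mono dual_order.trans finite_SigmaI finite_imageI finite_lessThan finite_subset)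
qed

lemma iso_lemma:
  fixes f :: "gen2 \<Rightarrow> gen4" and S :: "gen4 word set set"
  assumes R: "\<And>u v. (u, v) \<in> SD16_rels \<Longrightarrow> (mapw f u, mapw f v) \<in> G_rels"
    and S: "S = generate G6 {pres_gen G_rels (f gA), pres_gen G_rels (f gB)}"
    and Seq: "S = (\<lambda>(i, j). pres_class G_rels (gpow (f gA) i @ gpow (f gB) j)) ` ({..<8::nat} \<times> {..<2::nat})"
    and Sc: "card S = 16"
  shows "G6\<lparr>carrier := S\<rparr> \<cong> SD16"
proof -
  have sg: "subgroup S G6" unfolding S by (rule G6.generate_is_subgroup) (simp add: pres_gen_def)
  have into: "pres_class G_rels (mapw f u) \<in> S" for u
  proof (induction u)
    case Nil then show ?case using subgroup.one_closed[OF sg] by (simp add: G6_one)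
  next
    case (Cons l u)
    obtain g b where l: "l = (g, b)" by (cases l)
    have gin: "pres_gen G_rels (f g) \<in> S" unfolding S by (rule generate.incl) (cases g; simp)
    have lg: "pres_class G_rels [(f g, b)] \<in> S"
    proof (cases b)
      case False then show ?thesis using gin by (simp add: pres_gen_def)
    next
      case True
      have "inv\<^bsub>G6\<^esub> (pres_gen G_rels (f g)) = pres_class G_rels [(f g, b)]"
        using True by (simp add: G6_inv pres_gen_def)
      then show ?thesis using subgroup.m_inv_closed[OF sg gin] by simp
    qed
    have "pres_class G_rels (mapw f (l # u)) = pres_class G_rels [(f g, b)] \<otimes>\<^bsub>G6\<^esub> pres_class G_rels (mapw f u)"
      using l by (simp add: G6_mult)
    then show ?case using subgroup.m_closed[OF sg lg Cons.IH] by simp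
  qed
  have hom: "psi f \<in> hom SD16 (G6\<lparr>carrier := S\<rparr>)"
  proof (rule homI)
    fix A assume "A \<in> carrier SD16"
    then obtain u where "A = pres_class SD16_rels u" by (auto simp: SD16_def pg_carrier)
    then show "psi f A \<in> carrier (G6\<lparr>carrier := S\<rparr>)" using into psi_class[OF R] by simp
  next
    fix A B assume "A \<in> carrier SD16" "B \<in> carrier SD16"
    then obtain u v where "A = pres_class SD16_rels u" "B = pres_class SD16_rels v"
      by (auto simp: SD16_def pg_carrier)
    then show "psi f (A \<otimes>\<^bsub>SD16\<^esub> B) = psi f A \<otimes>\<^bsub>G6\<lparr>carrier := S\<rparr>\<^esub> psi f B"
      by (simp add: SD16_def pg_mult psi_class[OF R, unfolded SD16_def] G6_mult)
  qed
  have img: "psi f ` carrier SD16 = S"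
  proof
    show "psi f ` carrier SD16 \<subseteq> S"
      using into psi_class[OF R] by (auto simp: SD16_def pg_carrier)
  next
    show "S \<subseteq> psi f ` carrier SD16"
    proof
      fix h assume "h \<in> S"
      then obtain i j :: nat where h: "h = pres_class G_rels (gpow (f gA) i @ gpow (f gB) j)"
        unfolding Seq by auto
      have "h = psi f (pres_class SD16_rels (gpow gA i @ gpow gB j))"
        using h psi_class[OF R] by simp
      moreover have "pres_class SD16_rels (gpow gA i @ gpow gB j) \<in> carrier SD16"
        by (simp add: SD16_def pg_carrier)
      ultimately show "h \<in> psi f ` carrier SD16" by blast
    qed
  qed
  have fin: "finite (carrier SD16)" and c16: "card (carrier SD16) \<le> 16" using SD16_card by auto
  have "card (psi f ` carrier SD16) \<le> card (carrier SD16)" by (rule card_image_le[OF fin])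
  then have "card (psi f ` carrier SD16) = card (carrier SD16)" using img Sc c16 by simp
  then have inj: "inj_on (psi f) (carrier SD16)" by (rule eq_card_imp_inj_on[OF fin])
  have "psi f \<in> iso SD16 (G6\<lparr>carrier := S\<rparr>)"
    unfolding iso_def using hom inj img by (simp add: bij_betw_def)
  then have "SD16 \<cong> G6\<lparr>carrier := S\<rparr>" unfolding is_iso_def by blast
  then show ?thesis by (rule group.iso_sym[OF SD16_group])
qed

fun fH :: "gen2 \<Rightarrow> gen4" where "fH gA = gX" | "fH gB = gY"
fun fK :: "gen2 \<Rightarrow> gen4" where "fK gA = gZ" | "fK gB = gW"

lemma card_HH: "card HH = 16"
proof -
  have "HH = (\<lambda>t. pres_class G_rels (rep t)) ` ((\<lambda>(i, j). (i, j, 0::nat, 0::nat)) ` ({..<8::nat} \<times> {..<2::nat}))"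
    unfolding HH_eq by (auto simp: image_iff)
  moreover have "(\<lambda>(i, j). (i, j, 0::nat, 0::nat)) ` ({..<8::nat} \<times> {..<2::nat}) \<subseteq> set Tl"
    unfolding Tl_set by auto
  moreover have "card ((\<lambda>(i, j). (i, j, 0::nat, 0::nat)) ` ({..<8::nat} \<times> {..<2::nat})) = 16"
    by (subst card_image) (auto simp: inj_on_def)
  ultimately show ?thesis using card_image[OF inj_on_subset[OF rep_class_inj]] by metis
qed

lemma card_KK: "card KK = 16"
proof -
  have "KK = (\<lambda>t. pres_class G_rels (rep t)) ` ((\<lambda>(i, j). (0::nat, 0::nat, i, j)) ` ({..<8::nat} \<times> {..<2::nat}))"
    unfolding KK_eq by (auto simp: image_iff)
  moreover have "(\<lambda>(i, j). (0::nat, 0::nat, i, j)) ` ({..<8::nat} \<times> {..<2::nat}) \<subseteq> set Tl"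
    unfolding Tl_set by auto
  moreover have "card ((\<lambda>(i, j). (0::nat, 0::nat, i, j)) ` ({..<8::nat} \<times> {..<2::nat})) = 16"
    by (subst card_image) (auto simp: inj_on_def)
  ultimately show ?thesis using card_image[OF inj_on_subset[OF rep_class_inj]] by metis
qed

lemma iso_H: "G6\<lparr>carrier := HH\<rparr> \<cong> SD16"
proof (rule iso_lemma[where f = fH])
  show "(mapw fH u, mapw fH v) \<in> G_rels" if "(u, v) \<in> SD16_rels" for u v
    using that by (auto simp: SD16_rels_def G_rels_def mapw_def)
  show "HH = generate G6 {pres_gen G_rels (fH gA), pres_gen G_rels (fH gB)}" by (simp add: HH_def)
  show "HH = (\<lambda>(i, j). pres_class G_rels (gpow (fH gA) i @ gpow (fH gB) j)) ` ({..<8::nat} \<times> {..<2::nat})"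
    unfolding HH_eq by (simp add: rep_def)
  show "card HH = 16" by (rule card_HH)
qed

lemma iso_K: "G6\<lparr>carrier := KK\<rparr> \<cong> SD16"
proof (rule iso_lemma[where f = fK])
  show "(mapw fK u, mapw fK v) \<in> G_rels" if "(u, v) \<in> SD16_rels" for u v
    using that by (auto simp: SD16_rels_def G_rels_def mapw_def)
  show "KK = generate G6 {pres_gen G_rels (fK gA), pres_gen G_rels (fK gB)}" by (simp add: KK_def)
  show "KK = (\<lambda>(i, j). pres_class G_rels (gpow (fK gA) i @ gpow (fK gB) j)) ` ({..<8::nat} \<times> {..<2::nat})"
    unfolding KK_eq by (simp add: rep_def)
  show "card KK = 16" by (rule card_KK)
qed

theorem theorem6p6:
  fixes x y z w :: "gen4 word set" and H K :: "gen4 word set set"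
  defines "x \<equiv> pres_gen G_rels gX" and "y \<equiv> pres_gen G_rels gY"
      and "z \<equiv> pres_gen G_rels gZ" and "w \<equiv> pres_gen G_rels gW"
      and "H \<equiv> generate G6 {x, y}" and "K \<equiv> generate G6 {z, w}"
  shows "group G6
    \<and> order G6 = 256
    \<and> H <#>\<^bsub>G6\<^esub> K = carrier G6
    \<and> H \<inter> K = {\<one>\<^bsub>G6\<^esub>}
    \<and> G6\<lparr>carrier := H\<rparr> \<cong> SD16
    \<and> G6\<lparr>carrier := K\<rparr> \<cong> SD16
    \<and> group.ord G6 x = 8 \<and> group.ord G6 z = 8
    \<and> group.ord G6 y = 2 \<and> group.ord G6 w = 2
    \<and> inv\<^bsub>G6\<^esub> x \<otimes>\<^bsub>G6\<^esub> inv\<^bsub>G6\<^esub> z \<otimes>\<^bsub>G6\<^esub> x \<otimes>\<^bsub>G6\<^esub> z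
        = x [^]\<^bsub>G6\<^esub> (2::nat) \<otimes>\<^bsub>G6\<^esub> z [^]\<^bsub>G6\<^esub> (2::nat)
    \<and> inv\<^bsub>G6\<^esub> x \<otimes>\<^bsub>G6\<^esub> inv\<^bsub>G6\<^esub> z \<otimes>\<^bsub>G6\<^esub> x \<otimes>\<^bsub>G6\<^esub> z \<noteq> \<one>\<^bsub>G6\<^esub>
    \<and> core G6 (generate G6 {x}) = generate G6 {x [^]\<^bsub>G6\<^esub> (2::nat)}
    \<and> core G6 (generate G6 {z}) = generate G6 {z [^]\<^bsub>G6\<^esub> (2::nat)}
    \<and> card (core G6 (generate G6 {x})) = 4
    \<and> card (core G6 (generate G6 {z})) = 4"
proof -
  have H: "H = HH" unfolding H_def HH_def x_def y_def ..
  have K: "K = KK" unfolding K_def KK_def z_def w_def ..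
  show ?thesis
    unfolding H K x_def y_def z_def w_def
    using G6_group order_G6 HK_eq HK_int iso_H iso_K ord_x ord_y ord_z ord_w comm_eq comm_ne core_x core_z
    by blast
qed

end
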